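(* Consider the Gaussian linear model $y=X\beta_0+\varepsilon$, $\varepsilon\sim N_n(0,\sigma_0^2I_n)$ with known $\sigma_0^2$. Suppose the guidance vector $\tilde z^*$ and the active set $A_n$ are measurable with respect to a screening $\sigma$-field generated by auxiliary data independent of $y$ (so that, conditionally, they are fixed). Assume (A1), (A2), (A4), (A5), (A6), (A9), (A11) (see context) and: (B1) $A_n\supseteq\{j:|\hat\beta^{\mathrm{init}}_j|>t_n\}\cup\{j:\tilde z^*_j>u_n\}$ for a screening statistic $\hat\beta^{\mathrm{init}}$ and thresholds $t_n,u_n$; (B2) there are $r_n>t_n$, $q_n>u_n$ with $P(\min_{j\in S_0}|\hat\beta^{\mathrm{init}}_j|\ge r_n)\to1$ and $P(\min_{j\in S_0}\tilde z_j^*\ge q_n)\to1$; (B3) there is $L_n$, growing at most polylogarithmically in $p$, and $C>0$ with $P(|A_n|\le Cs_0L_n)\to1$; (B4) with $m_n=Cs_0L_n$, $\bar\epsilon_n^2=s_0\log m_n/n$, for all sufficiently large $M$ there are tests $\phi_n$ with $E_{\beta_0}\phi_n\to0$ and $\sup_{A\supseteq S_0,|A|\le m_n}\ \sup_{\beta\in\Theta(A),\|\beta-\beta_0\|_2\ge M\bar\epsilon_n}E_\beta(1-\phi_n)\le\exp(-c_T(M)n\bar\epsilon_n^2)$. Assume further that $s_0\log m_n\to\infty$; that the restricted priors satisfy, for a constant $C_F>0$ and all $A\in\mathcal A_n$, sets $\mathcal F_{n,A}\subseteq\Theta(A)$ with $\Pi_A(\mathcal F_{n,A}^c\mid\tilde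 z^* )\le e^{-C_Fn\bar\epsilon_n^2}$; that for a constant $C_D>0$ and every $\delta>0$ there are events $\Omega_{n,A}$ with $\sup_{A\in\mathcal A_n}P_{\beta_0}(\Omega^c_{n,A})\to0$ on which $\int_{\Theta(A)}\frac{f_\beta(y)}{f_{\beta_0}(y)}d\Pi_A(\beta\mid\tilde z^* )\ge e^{-(C_D+\delta)n\bar\epsilon_n^2}$; and that $\min\{c_T(M),C_F\}>C_D$ for all sufficiently large $M$. Then for all sufficiently large $M>0$, $$\Pi_{A_n}\big(\|\beta-\beta_0\|_2\ge M\bar\epsilon_n\,\big|\,y,\tilde z^*\big)\to0\quad\text{in }P_{\beta_0}\text{-probability}.$$
   Context: $S_0=\{j:\beta_{0j}\ne0\}$, $s_0=|S_0|$, $p=p_n$. Assumptions: (A1) $s_0\log p=o(n)$, $s_0\log p\to\infty$; (A2) there are $\phi_0>0$, $K\ge1$ with $\|Xv\|_2^2\ge n\phi_0^2\|v\|_2^2$ for all $v$ with at most $Ks_0$ nonzero entries; (A4) $\max_j|\tilde z_j^*|\le C_z$; (A5) $\max_{j\in S_0}|\beta_{0j}|\le B$; (A6) hyperparameters $\tau_0,a_c,b_c,\sigma_\eta$ fixed positive constants; (A9) $p_n\to\infty$, $\log p_n=o(n)$; (A11) $\|X\|_{\mathrm{op}}=O(\sqrt n)$. $\mathcal A_n=\{A\subseteq\{1,\dots,p\}:S_0\subseteq A,\ |A|\le m_n\}$, $\Theta(A)=\{\beta\in\mathbb R^p:\beta_j=0\ \forall j\notin A\}$. $f_\beta$ is the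 $N_n(X\beta,\sigma_0^2I_n)$ density; $E_\beta$, $P_{\beta_0}$ refer to $y\sim N_n(X\beta,\sigma_0^2I_n)$. Guided prior: $\kappa^2(z;\lambda,\tau,c,\eta)=\dfrac{c^2\tau^2\lambda^2e^{\eta z}}{c^2+\tau^2\lambda^2e^{\eta z}}$; independently $\lambda_j\sim C^+(0,1)$, $\tau\sim C^+(0,\tau_0)$, $c^2\sim\mathrm{IG}(a_c,b_c)$, $\eta\sim N^+(0,\sigma_\eta^2)$, and $\beta_j\sim N(0,\sigma_0^2\kappa^2(\tilde z_j^*;\lambda_j,\tau,c,\eta))$. $\Pi_A(\cdot\mid\tilde z^* )$ uses this hierarchy only for $j\in A$ and sets $\beta_j=0$ for $j\notin A$. The active posterior is $\Pi_{A}(B\mid y,\tilde z^* )=\int_{B\cap\Theta(A)}f_\beta(y)\,d\Pi_A(\beta\mid\tilde z^* )\big/\int_{\Theta(A)}f_\beta(y)\,d\Pi_A(\beta\mid\tilde z^* )$, evaluated at $A=A_n$. *)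

theory Defs
  imports "HOL-Probability.Probability"
begin

text \<open>Vectors in R^p are functions nat => real on the index set {..<p} (0-based);
  the design matrix X is nat => nat => real, X i j for i < n, j < p.\<close>

definition lin_pred :: "(nat \<Rightarrow> nat \<Rightarrow> real) \<Rightarrow> nat \<Rightarrow> (nat \<Rightarrow> real) \<Rightarrow> nat \<Rightarrow> real" where
  "lin_pred X p \<beta> i = (\<Sum>j<p. X i j * \<beta> j)"

definition data_measure ::
  "nat \<Rightarrow> nat \<Rightarrow> (nat \<Rightarrow> nat \<Rightarrow> real) \<Rightarrow> real \<Rightarrow> (nat \<Rightarrow> real) \<Rightarrow> (nat \<Rightarrow> real) measure" where
  "data_measure n p X \<sigma> \<beta> =
     PiM {..<n} (\<lambda>i. density lborel (normal_density (lin_pred X p \<beta> i) \<sigma>))"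

definition lik ::
  "nat \<Rightarrow> nat \<Rightarrow> (nat \<Rightarrow> nat \<Rightarrow> real) \<Rightarrow> real \<Rightarrow> (nat \<Rightarrow> real) \<Rightarrow> (nat \<Rightarrow> real) \<Rightarrow> real" where
  "lik n p X \<sigma> \<beta> y = (\<Prod>i<n. normal_density (lin_pred X p \<beta> i) \<sigma> (y i))"

definition l2dist :: "nat \<Rightarrow> (nat \<Rightarrow> real) \<Rightarrow> (nat \<Rightarrow> real) \<Rightarrow> real" where
  "l2dist p u v = sqrt (\<Sum>j<p. (u j - v j)^2)"

definition l2norm :: "nat \<Rightarrow> (nat \<Rightarrow> real) \<Rightarrow> real" where
  "l2norm p v = sqrt (\<Sum>j<p. (v j)^2)"

definition supp :: "nat \<Rightarrow> (nat \<Rightarrow> real) \<Rightarrow> nat set" where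
  "supp p v = {j. j < p \<and> v j \<noteq> 0}"

definition Theta :: "nat \<Rightarrow> nat set \<Rightarrow> (nat \<Rightarrow> real) set" where
  "Theta p A = {\<beta> \<in> PiE {..<p} (\<lambda>_. UNIV). \<forall>j<p. j \<notin> A \<longrightarrow> \<beta> j = 0}"

definition param_space :: "nat \<Rightarrow> (nat \<Rightarrow> real) measure" where
  "param_space p = PiM {..<p} (\<lambda>_. lborel)"

definition active_sets :: "nat \<Rightarrow> nat set \<Rightarrow> real \<Rightarrow> nat set set" where
  "active_sets p S0 m = {A. S0 \<subseteq> A \<and> A \<subseteq> {..<p} \<and> real (card A) \<le> m}"

definition half_cauchy :: "real \<Rightarrow> real measure" where
  "half_cauchy s = density lborel (\<lambda>x. ennreal (if x > 0 then 2 / (pi * s * (1 + (x / s)^2)) else 0))"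

definition inv_gamma :: "real \<Rightarrow> real \<Rightarrow> real measure" where
  "inv_gamma a b = density lborel
     (\<lambda>x. ennreal (if x > 0 then b powr a / Gamma a * x powr (- a - 1) * exp (- b / x) else 0))"

definition half_normal :: "real \<Rightarrow> real measure" where
  "half_normal s = density lborel (\<lambda>x. ennreal (if x > 0 then 2 * normal_density 0 s x else 0))"

text \<open>kappa^2(z; lambda, tau, c, eta), written in terms of c2 = c^2.\<close>
definition kappa2 :: "real \<Rightarrow> real \<Rightarrow> real \<Rightarrow> real \<Rightarrow> real \<Rightarrow> real" where
  "kappa2 z lam tau c2 eta =
     c2 * tau^2 * lam^2 * exp (eta * z) / (c2 + tau^2 * lam^2 * exp (eta * z))"

definition hyper_measure ::
  "nat set \<Rightarrow> real \<Rightarrow> real \<Rightarrow> real \<Rightarrow> real \<Rightarrow> ((nat \<Rightarrow> real) \<times> real \<times> real \<times> real) measure" where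
  "hyper_measure A \<tau>0 ac bc \<sigma>\<eta> =
     PiM A (\<lambda>_. half_cauchy 1) \<Otimes>\<^sub>M
       (half_cauchy \<tau>0 \<Otimes>\<^sub>M (inv_gamma ac bc \<Otimes>\<^sub>M half_normal \<sigma>\<eta>))"

definition guided_prior ::
  "nat \<Rightarrow> nat set \<Rightarrow> real \<Rightarrow> real \<Rightarrow> real \<Rightarrow> real \<Rightarrow> real \<Rightarrow> (nat \<Rightarrow> real) \<Rightarrow> (nat \<Rightarrow> real) measure" where
  "guided_prior p A \<sigma>0 \<tau>0 ac bc \<sigma>\<eta> z =
     hyper_measure A \<tau>0 ac bc \<sigma>\<eta> \<bind>
       (\<lambda>(lam, tau, c2, eta). PiM {..<p} (\<lambda>j.
          if j \<in> A then density lborel (normal_density 0 (sqrt (\<sigma>0^2 * kappa2 (z j) (lam j) tau c2 eta)))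
          else return lborel 0))"

definition active_posterior ::
  "nat \<Rightarrow> nat \<Rightarrow> (nat \<Rightarrow> nat \<Rightarrow> real) \<Rightarrow> real \<Rightarrow> (nat \<Rightarrow> real) measure \<Rightarrow> nat set
     \<Rightarrow> (nat \<Rightarrow> real) \<Rightarrow> (nat \<Rightarrow> real) set \<Rightarrow> real" where
  "active_posterior n p X \<sigma>0 PR A y B =
     (\<integral>\<beta>. indicator (B \<inter> Theta p A) \<beta> * lik n p X \<sigma>0 \<beta> y \<partial>PR) /
     (\<integral>\<beta>. indicator (Theta p A) \<beta> * lik n p X \<sigma>0 \<beta> y \<partial>PR)"

end

theory Submission
  imports Defs
begin

lemma nd_abs: "normal_density \<mu> \<sigma> = normal_density \<mu> \<bar>\<sigma>\<bar>"
  by (rule ext) (simp add: normal_density_def)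

lemma nd_zero: "normal_density \<mu> 0 x = 0"
  by (simp add: normal_density_def)

lemma subprob_nd: "subprob_space (density lborel (\<lambda>x. ennreal (normal_density \<mu> \<sigma> x)))"
proof (cases "\<sigma> = 0")
  case True
  show ?thesis
    by (rule subprob_spaceI) (auto simp: True nd_zero emeasure_density)
next
  case False
  then have "prob_space (density lborel (\<lambda>x. ennreal (normal_density \<mu> \<bar>\<sigma>\<bar> x)))"
    by (intro prob_space_normal_density) auto
  then show ?thesis
    by (subst nd_abs) (rule prob_space_imp_subprob_space)
qed

lemma subprob_PiM:
  assumes "finite I" "\<And>i. subprob_space (M i)"
  shows "subprob_space (PiM I M)"
proof -
  interpret product_sigma_finite M
    unfolding product_sigma_finite_def
    using assms(2) by (auto intro: finite_measure.sigma_finite_measure subprob_space.axioms(1))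
  have "emeasure (PiM I M) (space (PiM I M)) = (\<Prod>i\<in>I. emeasure (M i) (space (M i)))"
    unfolding space_PiM by (rule emeasure_PiM[OF assms(1)]) auto
  also have "\<dots> \<le> 1"
    by (rule prod_le_1) (auto intro: subprob_space.subprob_emeasure_le_1[OF assms(2)])
  finally show ?thesis
    by (intro subprob_spaceI) (auto simp: space_PiM PiE_eq_empty_iff subprob_space.subprob_not_empty[OF assms(2)])
qed

lemma sets_half_cauchy[measurable_cong, simp]: "sets (half_cauchy s) = sets borel"
  by (simp add: half_cauchy_def)
lemma sets_inv_gamma[measurable_cong, simp]: "sets (inv_gamma a b) = sets borel"
  by (simp add: inv_gamma_def)
lemma sets_half_normal[measurable_cong, simp]: "sets (half_normal s) = sets borel"
  by (simp add: half_normal_def)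

lemma sets_hyper: "sets (hyper_measure A \<tau>0 ac bc \<sigma>\<eta>) =
   sets (PiM A (\<lambda>_. borel) \<Otimes>\<^sub>M (borel \<Otimes>\<^sub>M (borel \<Otimes>\<^sub>M (borel::real measure))))"
  unfolding hyper_measure_def
  by (intro sets_pair_measure_cong sets_PiM_cong) auto

definition Kern :: "nat \<Rightarrow> nat set \<Rightarrow> real \<Rightarrow> (nat \<Rightarrow> real) \<Rightarrow> ((nat \<Rightarrow> real) \<times> real \<times> real \<times> real) \<Rightarrow> (nat \<Rightarrow> real) measure" where
  "Kern P A \<sigma>0 z = (\<lambda>(lam, tau, c2, eta). PiM {..<P} (\<lambda>j.
          if j \<in> A then density lborel (\<lambda>x. ennreal (normal_density 0 (sqrt (\<sigma>0^2 * kappa2 (z j) (lam j) tau c2 eta)) x))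
          else return lborel 0))"

lemma guided_prior_Kern: "guided_prior P A \<sigma>0 \<tau>0 ac bc \<sigma>\<eta> z = hyper_measure A \<tau>0 ac bc \<sigma>\<eta> \<bind> Kern P A \<sigma>0 z"
  unfolding guided_prior_def Kern_def ..

definition Kfac :: "nat set \<Rightarrow> real \<Rightarrow> (nat \<Rightarrow> real) \<Rightarrow> ((nat \<Rightarrow> real) \<times> real \<times> real \<times> real) \<Rightarrow> nat \<Rightarrow> real measure" where
  "Kfac A \<sigma>0 z h j = (if j \<in> A then density lborel (\<lambda>x. ennreal (normal_density 0
      (sqrt (\<sigma>0^2 * kappa2 (z j) (fst h j) (fst (snd h)) (fst (snd (snd h))) (snd (snd (snd h))))) x))
          else return lborel 0)"

lemma Kern_Kfac: "Kern P A \<sigma>0 z h = PiM {..<P} (Kfac A \<sigma>0 z h)"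
proof -
  obtain a b c d where h: "h = (a, b, c, d)" by (cases h) auto
  show ?thesis unfolding Kern_def Kfac_def h prod.case fst_conv snd_conv ..
qed

lemma subprob_Kfac: "subprob_space (Kfac A \<sigma>0 z h j)"
  unfolding Kfac_def using subprob_nd prob_space_imp_subprob_space[OF prob_space_return[of 0 lborel]] by auto

lemma sets_Kfac[simp, measurable_cong]: "sets (Kfac A \<sigma>0 z h j) = sets borel"
  unfolding Kfac_def by auto

lemma subprob_product_sigma_finite: "(\<And>i. subprob_space (M i)) \<Longrightarrow> product_sigma_finite M"
  unfolding product_sigma_finite_def
  by (auto intro: finite_measure.sigma_finite_measure subprob_space.axioms(1))

lemma subprob_Kern: "subprob_space (Kern P A \<sigma>0 z h)"
  unfolding Kern_Kfac by (rule subprob_PiM) (auto intro: subprob_Kfac)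

lemma sets_Kern: "sets (Kern P A \<sigma>0 z h) = sets (PiM {..<P} (\<lambda>_. lborel))"
  unfolding Kern_Kfac by (intro sets_PiM_cong) auto

lemma emeasure_Kern_box:
  assumes "\<And>j. j < P \<Longrightarrow> X j \<in> sets borel"
  shows "emeasure (Kern P A \<sigma>0 z h) (PiE {..<P} X) = (\<Prod>j<P. emeasure (Kfac A \<sigma>0 z h j) (X j))"
proof -
  interpret product_sigma_finite "Kfac A \<sigma>0 z h"
    by (rule subprob_product_sigma_finite) (rule subprob_Kfac)
  show ?thesis unfolding Kern_Kfac
    by (rule emeasure_PiM) (use assms in auto)
qed

lemma Kfac_meas:
  assumes zf: "\<And>j. (\<lambda>x. zf x j) \<in> borel_measurable M"
    and hf: "hf \<in> measurable M (hyper_measure A \<tau>0 ac bc \<sigma>\<eta>)"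
    and S: "S \<in> sets borel"
  shows "(\<lambda>x. emeasure (Kfac A \<sigma>0 (zf x) (hf x) j) S) \<in> borel_measurable M"
proof (cases "j \<in> A")
  case False
  then show ?thesis by (simp add: Kfac_def)
next
  case True
  have hf': "hf \<in> measurable M (PiM A (\<lambda>_. borel) \<Otimes>\<^sub>M (borel \<Otimes>\<^sub>M (borel \<Otimes>\<^sub>M (borel::real measure))))"
    using hf by (simp add: measurable_cong_sets[OF refl sets_hyper])
  have l: "(\<lambda>x. fst (hf x) j) \<in> borel_measurable M"
    using hf' True by measurable
  have t: "(\<lambda>x. fst (snd (hf x))) \<in> borel_measurable M" "(\<lambda>x. fst (snd (snd (hf x)))) \<in> borel_measurable M"
     "(\<lambda>x. snd (snd (snd (hf x)))) \<in> borel_measurable M"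
    using hf' by measurable
  have zj: "(\<lambda>x. zf x j) \<in> borel_measurable M" by (rule zf)
  note [measurable] = l t zj
  have "(\<lambda>x. emeasure (Kfac A \<sigma>0 (zf x) (hf x) j) S) = (\<lambda>x. \<integral>\<^sup>+ t. ennreal (normal_density 0
      (sqrt (\<sigma>0^2 * kappa2 (zf x j) (fst (hf x) j) (fst (snd (hf x))) (fst (snd (snd (hf x)))) (snd (snd (snd (hf x)))))) t) * indicator S t \<partial>lborel)"
    using True S by (auto simp: Kfac_def emeasure_density nn_integral_set_ennreal)
  also have "\<dots> \<in> borel_measurable M"
  proof (rule lborel.borel_measurable_nn_integral)
    have S': "S \<in> sets lborel" using S by simp
    have g: "(\<lambda>(x, t). sqrt (\<sigma>0^2 * kappa2 (zf x j) (fst (hf x) j) (fst (snd (hf x))) (fst (snd (snd (hf x)))) (snd (snd (snd (hf x)))))) \<in> borel_measurable (M \<Otimes>\<^sub>M lborel)"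
      unfolding kappa2_def by measurable
    have "(\<lambda>(x, t). normal_density 0 (sqrt (\<sigma>0^2 * kappa2 (zf x j) (fst (hf x) j) (fst (snd (hf x))) (fst (snd (snd (hf x)))) (snd (snd (snd (hf x)))))) t) \<in> borel_measurable (M \<Otimes>\<^sub>M lborel)"
      using g unfolding normal_density_def split_beta' by measurable
    then show "(\<lambda>(x, t). ennreal (normal_density 0 (sqrt (\<sigma>0^2 * kappa2 (zf x j) (fst (hf x) j) (fst (snd (hf x))) (fst (snd (snd (hf x)))) (snd (snd (snd (hf x)))))) t) * indicator S t) \<in> borel_measurable (M \<Otimes>\<^sub>M lborel)"
      using S' unfolding split_beta' by measurable
  qed
  finally show ?thesis .
qed

lemma Kern_meas:
  assumes zf: "\<And>j. (\<lambda>x. zf x j) \<in> borel_measurable M"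
    and hf: "hf \<in> measurable M (hyper_measure A \<tau>0 ac bc \<sigma>\<eta>)"
  shows "(\<lambda>x. Kern P A \<sigma>0 (zf x) (hf x)) \<in> measurable M (subprob_algebra (PiM {..<P} (\<lambda>_. lborel)))"
proof -
  let ?G = "prod_algebra {..<P} (\<lambda>_. lborel)"
  have box: "(\<lambda>x. emeasure (Kern P A \<sigma>0 (zf x) (hf x)) B) \<in> borel_measurable M" if B: "B \<in> ?G" for B
  proof -
    obtain X where X: "B = PiE {..<P} X" "X \<in> (\<Pi> j\<in>{..<P}. sets lborel)"
      using B unfolding prod_algebra_eq_finite[OF finite_lessThan] by auto
    have "(\<lambda>x. emeasure (Kern P A \<sigma>0 (zf x) (hf x)) B) = (\<lambda>x. \<Prod>j<P. emeasure (Kfac A \<sigma>0 (zf x) (hf x) j) (X j))"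
      using X by (intro ext) (auto intro!: emeasure_Kern_box)
    also have "\<dots> \<in> borel_measurable M"
      using X by (intro borel_measurable_prod_ennreal Kfac_meas[OF zf hf]) auto
    finally show ?thesis .
  qed
  show ?thesis
  proof (rule measurable_subprob_algebra_generated[where \<Omega> = "PiE {..<P} (\<lambda>_. UNIV)" and G = ?G])
    show "sets (Pi\<^sub>M {..<P} (\<lambda>_. lborel)) = sigma_sets (PiE {..<P} (\<lambda>_. UNIV)) ?G"
      by (simp add: sets_PiM)
    show "Int_stable ?G" by (rule Int_stable_prod_algebra)
    show "?G \<subseteq> Pow (PiE {..<P} (\<lambda>_. UNIV))"
      using prod_algebra_sets_into_space[of "{..<P}" "\<lambda>_. lborel"] by simp
    show "subprob_space (Kern P A \<sigma>0 (zf a) (hf a))" for a by (rule subprob_Kern)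
    show "sets (Kern P A \<sigma>0 (zf a) (hf a)) = sets (Pi\<^sub>M {..<P} (\<lambda>_. lborel))" for a by (rule sets_Kern)
    show "B \<in> ?G \<Longrightarrow> (\<lambda>a. emeasure (Kern P A \<sigma>0 (zf a) (hf a)) B) \<in> borel_measurable M" for B
      by (rule box)
    have "PiE {..<P} (\<lambda>_. UNIV) \<in> ?G"
      unfolding prod_algebra_eq_finite[OF finite_lessThan] by auto
    then show "(\<lambda>a. emeasure (Kern P A \<sigma>0 (zf a) (hf a)) (PiE {..<P} (\<lambda>_. UNIV))) \<in> borel_measurable M"
      by (rule box)
  qed
qed

lemma hc_mass:
  assumes s: "s > 0"
  shows "emeasure (half_cauchy s) (space (half_cauchy s)) \<le> 1"
proof -
  define g where "g x = 2 / (pi * s * (1 + (x / s)^2))" for x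
  have gpos: "0 \<le> g x" for x using s by (auto simp: g_def intro!: divide_nonneg_pos add_pos_nonneg)
  have "emeasure (half_cauchy s) (space (half_cauchy s)) =
      (\<integral>\<^sup>+x. ennreal (if 0 < x then g x else 0) \<partial>lborel)"
    unfolding half_cauchy_def g_def by (simp add: emeasure_density)
  also have "\<dots> \<le> (\<integral>\<^sup>+x\<in>{0..}. ennreal (g x) \<partial>lborel)"
    by (intro nn_integral_mono) (auto split: split_indicator)
  also have "\<dots> = ennreal (1 - 2 / pi * arctan (0 / s))"
  proof (rule nn_integral_FTC_atLeast)
    show "g \<in> borel_measurable borel" unfolding g_def by measurable
    show "((\<lambda>x. 2 / pi * arctan (x / s)) has_real_derivative g x) (at x)" for x
    proof -
      have d: "((\<lambda>x. arctan (x / s)) has_real_derivative inverse (1 + (x/s)^2) * (1 / s)) (at x)"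
        by (rule DERIV_chain2[OF DERIV_arctan]) (rule DERIV_cdivide[OF DERIV_ident])
      have "((\<lambda>x. 2 / pi * arctan (x / s)) has_real_derivative 2 / pi * (inverse (1 + (x/s)^2) * (1 / s))) (at x)"
        by (rule DERIV_cmult[OF d])
      moreover have "2 / pi * (inverse (1 + (x/s)^2) * (1 / s)) = g x"
        unfolding g_def by (simp add: field_simps)
      ultimately show ?thesis by simp
    qed
    show "0 \<le> g x" for x by (rule gpos)
    have "filterlim (\<lambda>x. (1/s) * x) at_top at_top"
      by (rule filterlim_tendsto_pos_mult_at_top[OF tendsto_const _ filterlim_ident]) (use s in simp)
    then have "filterlim (\<lambda>x. x / s) at_top at_top" by simp
    then have "((\<lambda>x. arctan (x / s)) \<longlongrightarrow> pi / 2) at_top"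
      by (rule filterlim_compose[OF tendsto_arctan_at_top])
    then show "((\<lambda>x. 2 / pi * arctan (x / s)) \<longlongrightarrow> 1) at_top"
      using tendsto_mult[OF tendsto_const[of "2/pi"]] by fastforce
  qed
  also have "\<dots> = 1" by simp
  finally show ?thesis .
qed

lemma hn_mass: "emeasure (half_normal s) (space (half_normal s)) \<le> 2"
proof -
  have "emeasure (half_normal s) (space (half_normal s)) =
      (\<integral>\<^sup>+x. ennreal (if 0 < x then 2 * normal_density 0 s x else 0) \<partial>lborel)"
    unfolding half_normal_def by (simp add: emeasure_density)
  also have "\<dots> \<le> (\<integral>\<^sup>+x. 2 * ennreal (normal_density 0 s x) \<partial>lborel)"
    by (intro nn_integral_mono) (auto simp: ennreal_mult normal_density_nonneg)
  also have "\<dots> = 2 * (\<integral>\<^sup>+x. ennreal (normal_density 0 s x) \<partial>lborel)"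
    by (rule nn_integral_cmult) measurable
  also have "(\<integral>\<^sup>+x. ennreal (normal_density 0 s x) \<partial>lborel) \<le> 1"
  proof -
    have "(\<integral>\<^sup>+x. ennreal (normal_density 0 s x) \<partial>lborel) = emeasure (density lborel (\<lambda>x. ennreal (normal_density 0 s x))) UNIV"
      by (simp add: emeasure_density)
    also have "\<dots> \<le> 1"
      using subprob_space.subprob_emeasure_le_1[OF subprob_nd] by simp
    finally show ?thesis .
  qed
  then have "2 * (\<integral>\<^sup>+x. ennreal (normal_density 0 s x) \<partial>lborel) \<le> 2 * 1"
    by (intro mult_left_mono) auto
  finally show ?thesis by simp
qed

lemma pow_fact_le_exp:
  fixes t :: real assumes "0 \<le> t" shows "t ^ k / fact k \<le> exp t"
proof -
  have s: "(\<lambda>n. t ^ n / fact n) sums exp t"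
    using exp_converges[of t] by (simp add: divide_inverse mult.commute)
  have "sum (\<lambda>n. t ^ n / fact n) {k} \<le> suminf (\<lambda>n. t ^ n / fact n)"
    by (rule sum_le_suminf) (use s assms in \<open>auto simp: sums_iff\<close>)
  then show ?thesis using s by (simp add: sums_iff)
qed

lemma ig_mass:
  assumes a: "a > 0" and b: "b > 0"
  shows "emeasure (inv_gamma a b) (space (inv_gamma a b)) < \<infinity>"
proof -
  define c0 where "c0 = b powr a / Gamma a"
  have c0: "c0 \<ge> 0" using a b Gamma_real_pos[of a] by (simp add: c0_def)
  define k where "k = nat \<lceil>a + 1\<rceil>"
  have k: "real k \<ge> a + 1" unfolding k_def by linarith
  define c1 where "c1 = c0 * (fact k / b ^ k)"
  have c1: "c1 \<ge> 0" using c0 b by (simp add: c1_def)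
  have bound: "ennreal (if x > 0 then c0 * x powr (- a - 1) * exp (- b / x) else 0)
     \<le> ennreal (c1 * indicator {0..1} x) + ennreal (c0 * x powr (- a - 1) * indicator {1..} x)" for x
  proof (cases "x > 0")
    case False then show ?thesis by simp
  next
    case x: True
    show ?thesis
    proof (cases "x \<le> 1")
      case True
      have "(b / x) ^ k / fact k \<le> exp (b / x)" using x b by (intro pow_fact_le_exp) simp
      then have "exp (- b / x) \<le> fact k * x ^ k / b ^ k"
        using x b by (simp add: exp_minus field_simps power_divide)
      then have "x powr (- a - 1) * exp (- b / x) \<le> x powr (- a - 1) * (fact k * x ^ k / b ^ k)"
        using x by (intro mult_left_mono) auto
      also have "\<dots> = fact k / b ^ k * (x powr (- a - 1) * x powr real k)"
        using x by (simp add: powr_realpow field_simps)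
      also have "x powr (- a - 1) * x powr real k = x powr (real k - a - 1)"
        using x by (simp add: powr_add[symmetric] algebra_simps)
      finally have le1: "x powr (- a - 1) * exp (- b / x) \<le> fact k / b ^ k * x powr (real k - a - 1)" .
      have "x powr (real k - a - 1) \<le> 1"
        using x True k by (intro powr_le1) auto
      then have "fact k / b ^ k * x powr (real k - a - 1) \<le> fact k / b ^ k * 1"
        using b by (intro mult_left_mono) auto
      with le1 have "x powr (- a - 1) * exp (- b / x) \<le> fact k / b ^ k" by simp
      then have "c0 * (x powr (- a - 1) * exp (- b / x)) \<le> c0 * (fact k / b ^ k)"
        using c0 by (rule mult_left_mono)
      then have "c0 * x powr (- a - 1) * exp (- b / x) \<le> c1"
        unfolding c1_def by (simp add: mult.assoc)
      then show ?thesis using x True c1 c0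
        by (auto intro!: add_increasing2 ennreal_leI)
    next
      case False
      have "c0 * x powr (- a - 1) * exp (- b / x) \<le> c0 * x powr (- a - 1) * 1"
        using x b c0 by (intro mult_left_mono) auto
      then show ?thesis using x False c0 c1
        by (auto intro!: add_increasing ennreal_leI)
    qed
  qed
  have "emeasure (inv_gamma a b) (space (inv_gamma a b)) =
      (\<integral>\<^sup>+x. ennreal (if x > 0 then c0 * x powr (- a - 1) * exp (- b / x) else 0) \<partial>lborel)"
    unfolding inv_gamma_def c0_def by (simp add: emeasure_density)
  also have "\<dots> \<le> (\<integral>\<^sup>+x. ennreal (c1 * indicator {0..1::real} x) + ennreal (c0 * x powr (- a - 1) * indicator {1..} x) \<partial>lborel)"
    by (intro nn_integral_mono bound)
  also have "\<dots> = (\<integral>\<^sup>+x. ennreal (c1 * indicator {0..1::real} x) \<partial>lborel) + (\<integral>\<^sup>+x. ennreal (c0 * x powr (- a - 1) * indicator {1..} x) \<partial>lborel)"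
    by (rule nn_integral_add; measurable)
  also have "(\<integral>\<^sup>+x. ennreal (c1 * indicator {0..1::real} x) \<partial>lborel) = ennreal c1"
    using c1 by (simp add: ennreal_mult ennreal_indicator nn_integral_cmult_indicator)
  also have "(\<integral>\<^sup>+x. ennreal (c0 * x powr (- a - 1) * indicator {1..} x) \<partial>lborel)
      = (\<integral>\<^sup>+x\<in>{1..}. ennreal (c0 * x powr (- a - 1)) \<partial>lborel)"
    by (intro nn_integral_cong) (auto split: split_indicator)
  also have "\<dots> = ennreal (0 - (- c0 * 1 powr (- a) / a))"
  proof (rule nn_integral_FTC_atLeast)
    show "(\<lambda>x. c0 * x powr (- a - 1)) \<in> borel_measurable borel" by measurable
    show "((\<lambda>x. - c0 * x powr (- a) / a) has_real_derivative c0 * x powr (- a - 1)) (at x)" if "1 \<le> x" for x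
    proof -
      have "((\<lambda>x. - c0 * x powr (- a) / a) has_real_derivative - c0 * ((- a) * x powr (- a - 1)) / a) (at x)"
        using that by (intro DERIV_cdivide DERIV_cmult has_real_derivative_powr) auto
      then show ?thesis using a by simp
    qed
    show "0 \<le> c0 * x powr (- a - 1)" for x using c0 by simp
    have "((\<lambda>x. x powr (- a)) \<longlongrightarrow> 0) at_top"
      by (rule tendsto_neg_powr) (use a in \<open>auto intro: filterlim_ident\<close>)
    then have "((\<lambda>x. (- c0 / a) * x powr (- a)) \<longlongrightarrow> (- c0 / a) * 0) at_top"
      by (rule tendsto_mult[OF tendsto_const])
    then show "((\<lambda>x. - c0 * x powr (- a) / a) \<longlongrightarrow> 0) at_top"
      by simp
  qed
  finally show ?thesis by (auto simp: ennreal_plus[symmetric] simp del: ennreal_plus intro: le_less_trans)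
qed

lemma finite_mass_pair:
  assumes "finite_measure M1" "finite_measure M2"
  shows "emeasure (M1 \<Otimes>\<^sub>M M2) (space (M1 \<Otimes>\<^sub>M M2)) = emeasure M1 (space M1) * emeasure M2 (space M2)"
proof -
  interpret M2: finite_measure M2 by fact
  show ?thesis unfolding space_pair_measure
    by (rule M2.emeasure_pair_measure_Times) auto
qed

definition hyperC :: "real \<Rightarrow> real \<Rightarrow> ennreal" where
  "hyperC ac bc = 2 * emeasure (inv_gamma ac bc) (space (inv_gamma ac bc))"

lemma hyper_props:
  assumes A: "finite A" and pos: "\<tau>0 > 0" "ac > 0" "bc > 0"
  shows "finite_measure (hyper_measure A \<tau>0 ac bc \<sigma>\<eta>)"
    "emeasure (hyper_measure A \<tau>0 ac bc \<sigma>\<eta>) (space (hyper_measure A \<tau>0 ac bc \<sigma>\<eta>)) \<le> hyperC ac bc"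
    "hyperC ac bc < \<infinity>"
proof -
  have hc1: "subprob_space (half_cauchy 1)"
    using hc_mass[of 1] by (intro subprob_spaceI) (auto simp: half_cauchy_def)
  then have PA: "subprob_space (PiM A (\<lambda>_. half_cauchy 1))"
    using A by (intro subprob_PiM) auto
  have fhc: "finite_measure (half_cauchy \<tau>0)"
    using hc_mass[OF pos(1)] by (intro finite_measureI) (auto simp: top_unique)
  have fig: "finite_measure (inv_gamma ac bc)"
    using ig_mass[OF pos(2,3)] by (intro finite_measureI) auto
  have fhn: "finite_measure (half_normal \<sigma>\<eta>)"
    using hn_mass[of \<sigma>\<eta>] by (intro finite_measureI) (auto simp: top_unique)
  have f34: "finite_measure (inv_gamma ac bc \<Otimes>\<^sub>M half_normal \<sigma>\<eta>)"
    by (rule finite_measure_pair_measure[OF fhn fig])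
  have f234: "finite_measure (half_cauchy \<tau>0 \<Otimes>\<^sub>M (inv_gamma ac bc \<Otimes>\<^sub>M half_normal \<sigma>\<eta>))"
    by (rule finite_measure_pair_measure[OF f34 fhc])
  have fPA: "finite_measure (PiM A (\<lambda>_. half_cauchy 1))"
    using PA by (rule subprob_space.axioms)
  show "finite_measure (hyper_measure A \<tau>0 ac bc \<sigma>\<eta>)"
    unfolding hyper_measure_def by (rule finite_measure_pair_measure[OF f234 fPA])
  have "emeasure (hyper_measure A \<tau>0 ac bc \<sigma>\<eta>) (space (hyper_measure A \<tau>0 ac bc \<sigma>\<eta>)) =
     emeasure (PiM A (\<lambda>_. half_cauchy 1)) (space (PiM A (\<lambda>_. half_cauchy 1))) *
     (emeasure (half_cauchy \<tau>0) (space (half_cauchy \<tau>0)) *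
     (emeasure (inv_gamma ac bc) (space (inv_gamma ac bc)) * emeasure (half_normal \<sigma>\<eta>) (space (half_normal \<sigma>\<eta>))))"
    unfolding hyper_measure_def
    by (simp add: finite_mass_pair fPA f234 fhc f34 fig fhn)
  also have "\<dots> \<le> 1 * (1 * (emeasure (inv_gamma ac bc) (space (inv_gamma ac bc)) * 2))"
    by (intro mult_mono subprob_space.subprob_emeasure_le_1[OF PA] hc_mass[OF pos(1)] hn_mass order_refl) auto
  finally show "emeasure (hyper_measure A \<tau>0 ac bc \<sigma>\<eta>) (space (hyper_measure A \<tau>0 ac bc \<sigma>\<eta>)) \<le> hyperC ac bc"
    by (simp add: hyperC_def mult.commute)
  show "hyperC ac bc < \<infinity>"
    unfolding hyperC_def using ig_mass[OF pos(2,3)] by (simp add: ennreal_mult_less_top)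
qed

lemma indicator_PiE_prod:
  assumes "y \<in> PiE I (\<lambda>_. UNIV)" and fin: "finite I"
  shows "(indicator (PiE I A) y :: ennreal) = (\<Prod>i\<in>I. indicator (A i) (y i))"
proof (cases "y \<in> PiE I A")
  case True then show ?thesis by (auto simp: indicator_def PiE_iff)
next
  case False
  then obtain i where "i \<in> I" "y i \<notin> A i" using assms by (auto simp: PiE_iff)
  then have "(\<Prod>i\<in>I. (indicator (A i) (y i) :: ennreal)) = 0"
    by (subst prod.remove[OF fin \<open>i \<in> I\<close>]) (simp add: \<open>y i \<notin> A i\<close>)
  then show ?thesis using False by simp
qed

lemma lik_nonneg: "0 \<le> lik n P X \<sigma> \<beta> y"
  unfolding lik_def by (intro prod_nonneg) (auto simp: normal_density_nonneg)

lemma lik_meas[measurable]: "(\<lambda>(b, y). lik n P X \<sigma> b y) \<in> borel_measurable (PiM {..<P} (\<lambda>_. lborel) \<Otimes>\<^sub>M PiM {..<n} (\<lambda>_. lborel))"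
  unfolding lik_def lin_pred_def normal_density_def split_beta' by measurable

lemma lik_meas_y[measurable]: "lik n P X \<sigma> b \<in> borel_measurable (PiM {..<n} (\<lambda>_. lborel))"
  unfolding lik_def lin_pred_def normal_density_def by measurable

lemma data_density:
  assumes \<sigma>: "\<sigma> > 0"
  shows "data_measure n P X \<sigma> \<beta> = density (PiM {..<n} (\<lambda>_. lborel)) (\<lambda>y. ennreal (lik n P X \<sigma> \<beta> y))"
proof -
  define F where "F i = density lborel (\<lambda>x. ennreal (normal_density (lin_pred X P \<beta> i) \<sigma> x))" for i
  have Fpsf: "product_sigma_finite F"
    unfolding product_sigma_finite_def F_def
    using prob_space_normal_density[OF \<sigma>] prob_space_imp_sigma_finite by blast
  have Lpsf: "product_sigma_finite (\<lambda>_::nat. lborel)"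
    unfolding product_sigma_finite_def by (simp add: lborel.sigma_finite_measure_axioms)
  have "density (PiM {..<n} (\<lambda>_. lborel)) (\<lambda>y. ennreal (lik n P X \<sigma> \<beta> y)) = PiM {..<n} F"
  proof (rule product_sigma_finite.PiM_eqI[OF Fpsf])
    show "sets (density (PiM {..<n} (\<lambda>_. lborel)) (\<lambda>y. ennreal (lik n P X \<sigma> \<beta> y))) = sets (PiM {..<n} F)"
      unfolding F_def sets_density by (intro sets_PiM_cong) auto
    fix A assume A: "\<And>i. i \<in> {..<n} \<Longrightarrow> A i \<in> sets (F i)"
    then have A': "\<And>i. i \<in> {..<n} \<Longrightarrow> A i \<in> sets borel" by (simp add: F_def)
    have "emeasure (density (PiM {..<n} (\<lambda>_. lborel)) (\<lambda>y. ennreal (lik n P X \<sigma> \<beta> y))) (PiE {..<n} A)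
      = (\<integral>\<^sup>+y. ennreal (lik n P X \<sigma> \<beta> y) * indicator (PiE {..<n} A) y \<partial>PiM {..<n} (\<lambda>_. lborel))"
      using A' by (subst emeasure_density) (auto intro!: sets_PiM_I_finite nn_integral_cong simp: mult.commute)
    also have "\<dots> = (\<integral>\<^sup>+y. (\<Prod>i<n. ennreal (normal_density (lin_pred X P \<beta> i) \<sigma> (y i)) * indicator (A i) (y i)) \<partial>PiM {..<n} (\<lambda>_. lborel))"
    proof (intro nn_integral_cong)
      fix y assume "y \<in> space (PiM {..<n} (\<lambda>_. lborel :: real measure))"
      then have y: "y \<in> PiE {..<n} (\<lambda>_. UNIV)" by (simp add: space_PiM)
      show "ennreal (lik n P X \<sigma> \<beta> y) * indicator (PiE {..<n} A) y =
        (\<Prod>i<n. ennreal (normal_density (lin_pred X P \<beta> i) \<sigma> (y i)) * indicator (A i) (y i))"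
        unfolding lik_def indicator_PiE_prod[OF y finite_lessThan] prod.distrib
        by (subst prod_ennreal[symmetric]) (auto simp: normal_density_nonneg)
    qed
    also have "\<dots> = (\<Prod>i<n. \<integral>\<^sup>+x. ennreal (normal_density (lin_pred X P \<beta> i) \<sigma> x) * indicator (A i) x \<partial>lborel)"
      by (rule product_sigma_finite.product_nn_integral_prod[OF Lpsf,where f = "\<lambda>i x. ennreal (normal_density (lin_pred X P \<beta> i) \<sigma> x) * indicator (A i) x", simplified])
         (use A' in \<open>auto intro!: borel_measurable_times_ennreal\<close>)
    also have "\<dots> = (\<Prod>i<n. emeasure (F i) (A i))"
      using A' by (intro prod.cong refl) (simp add: F_def emeasure_density nn_integral_set_ennreal mult.commute)
    finally show "emeasure (density (PiM {..<n} (\<lambda>_. lborel)) (\<lambda>y. ennreal (lik n P X \<sigma> \<beta> y))) (PiE {..<n} A) = (\<Prod>i\<in>{..<n}. emeasure (F i) (A i))"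
      by simp
  qed simp
  then show ?thesis unfolding data_measure_def F_def by simp
qed

abbreviation "PN P \<equiv> PiM {..<P} (\<lambda>_. lborel :: real measure)"

lemma Kern_meas_h: "Kern P A \<sigma>0 z \<in> measurable (hyper_measure A \<tau>0 ac bc \<sigma>\<eta>) (subprob_algebra (PN P))"
  using Kern_meas[of "\<lambda>_. z" "hyper_measure A \<tau>0 ac bc \<sigma>\<eta>" "\<lambda>x. x" A \<tau>0 ac bc \<sigma>\<eta> P \<sigma>0] by simp

lemma hyper_space_ne: "space (hyper_measure A \<tau>0 ac bc \<sigma>\<eta>) \<noteq> {}"
  unfolding hyper_measure_def
  by (simp add: space_pair_measure space_PiM PiE_eq_empty_iff half_cauchy_def inv_gamma_def half_normal_def)

lemma prior_sets: "sets (guided_prior P A \<sigma>0 \<tau>0 ac bc \<sigma>\<eta> z) = sets (PN P)"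
  unfolding guided_prior_Kern
  by (rule sets_bind[OF sets_Kern hyper_space_ne])

lemma prior_space: "space (guided_prior P A \<sigma>0 \<tau>0 ac bc \<sigma>\<eta> z) = space (PN P)"
  using prior_sets by (rule sets_eq_imp_space_eq)

lemma prior_nn_integral:
  assumes "f \<in> borel_measurable (PN P)"
  shows "(\<integral>\<^sup>+b. f b \<partial>guided_prior P A \<sigma>0 \<tau>0 ac bc \<sigma>\<eta> z) =
    (\<integral>\<^sup>+h. \<integral>\<^sup>+b. f b \<partial>Kern P A \<sigma>0 z h \<partial>hyper_measure A \<tau>0 ac bc \<sigma>\<eta>)"
  unfolding guided_prior_Kern by (rule nn_integral_bind[OF assms Kern_meas_h])

lemma prior_mass:
  assumes A: "finite A" and pos: "\<tau>0 > 0" "ac > 0" "bc > 0"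
  shows "emeasure (guided_prior P A \<sigma>0 \<tau>0 ac bc \<sigma>\<eta> z) (space (guided_prior P A \<sigma>0 \<tau>0 ac bc \<sigma>\<eta> z)) \<le> hyperC ac bc"
proof -
  let ?H = "hyper_measure A \<tau>0 ac bc \<sigma>\<eta>"
  have "emeasure (guided_prior P A \<sigma>0 \<tau>0 ac bc \<sigma>\<eta> z) (space (guided_prior P A \<sigma>0 \<tau>0 ac bc \<sigma>\<eta> z))
      = (\<integral>\<^sup>+h. emeasure (Kern P A \<sigma>0 z h) (space (PN P)) \<partial>?H)"
    unfolding prior_space unfolding guided_prior_Kern
    by (rule emeasure_bind[OF hyper_space_ne Kern_meas_h]) simp
  also have "\<dots> \<le> (\<integral>\<^sup>+h. 1 \<partial>?H)"
    by (intro nn_integral_mono) (metis sets_Kern sets_eq_imp_space_eq subprob_Kern subprob_space.subprob_emeasure_le_1)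
  also have "\<dots> = emeasure ?H (space ?H)" by simp
  also have "\<dots> \<le> hyperC ac bc" by (rule hyper_props(2)[OF A pos])
  finally show ?thesis .
qed

lemma prior_finite:
  assumes A: "finite A" and pos: "\<tau>0 > 0" "ac > 0" "bc > 0"
  shows "finite_measure (guided_prior P A \<sigma>0 \<tau>0 ac bc \<sigma>\<eta> z)"
  using order.strict_trans1[OF prior_mass[OF assms, of P \<sigma>0 \<sigma>\<eta> z] hyper_props(3)[OF assms]]
  by (intro finite_measureI) auto

lemma prior_nn_meas:
  assumes A: "finite A" and pos: "\<tau>0 > 0" "ac > 0" "bc > 0"
    and zf: "\<And>j. (\<lambda>x. zf x j) \<in> borel_measurable M"
    and g: "(\<lambda>(x, b). g x b) \<in> borel_measurable (M \<Otimes>\<^sub>M PN P)"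
  shows "(\<lambda>x. \<integral>\<^sup>+b. g x b \<partial>guided_prior P A \<sigma>0 \<tau>0 ac bc \<sigma>\<eta> (zf x)) \<in> borel_measurable M"
proof -
  let ?H = "hyper_measure A \<tau>0 ac bc \<sigma>\<eta>"
  interpret H: finite_measure ?H by (rule hyper_props(1)[OF A pos])
  have eq: "(\<integral>\<^sup>+b. g x b \<partial>guided_prior P A \<sigma>0 \<tau>0 ac bc \<sigma>\<eta> (zf x)) =
      (\<integral>\<^sup>+h. \<integral>\<^sup>+b. g x b \<partial>Kern P A \<sigma>0 (zf x) h \<partial>?H)" if "x \<in> space M" for x
    using measurable_Pair2[OF g that] by (intro prior_nn_integral) simp
  have K: "(\<lambda>p. Kern P A \<sigma>0 (zf (fst p)) (snd p)) \<in> measurable (M \<Otimes>\<^sub>M ?H) (subprob_algebra (PN P))"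
    by (rule Kern_meas) (use zf in measurable)
  have "(\<lambda>x. \<integral>\<^sup>+h. \<integral>\<^sup>+b. g x b \<partial>Kern P A \<sigma>0 (zf x) h \<partial>?H) \<in> borel_measurable M"
  proof (rule H.borel_measurable_nn_integral)
    have "(\<lambda>p. \<integral>\<^sup>+b. g (fst p) b \<partial>Kern P A \<sigma>0 (zf (fst p)) (snd p)) \<in> borel_measurable (M \<Otimes>\<^sub>M ?H)"
      by (rule nn_integral_measurable_subprob_algebra2[OF _ K]) (use g in measurable)
    then show "(\<lambda>(x, h). \<integral>\<^sup>+b. g x b \<partial>Kern P A \<sigma>0 (zf x) h) \<in> borel_measurable (M \<Otimes>\<^sub>M ?H)"
      by (simp add: split_beta')
  qed
  then show ?thesis by (subst measurable_cong[OF eq]) auto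
qed

lemma integral_enn2real:
  fixes f :: "_ \<Rightarrow> real"
  assumes f: "f \<in> borel_measurable M" and nn: "\<And>x. x \<in> space M \<Longrightarrow> 0 \<le> f x"
  shows "integral\<^sup>L M f = enn2real (\<integral>\<^sup>+x. ennreal (f x) \<partial>M)"
proof (cases "integrable M f")
  case True
  then show ?thesis using nn by (subst integral_eq_nn_integral) (auto intro: AE_I2)
next
  case False
  have "(\<integral>\<^sup>+x. ennreal (f x) \<partial>M) = \<infinity>"
  proof (rule ccontr)
    assume "(\<integral>\<^sup>+x. ennreal (f x) \<partial>M) \<noteq> \<infinity>"
    then have "integrable M f" using f nn by (intro integrableI_nonneg) (auto intro: AE_I2 simp: top.not_eq_extremum)
    with False show False by simp
  qed
  then show ?thesis using False by (simp add: not_integrable_integral_eq)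
qed

lemma integral_le_nn:
  fixes f :: "_ \<Rightarrow> real"
  assumes f: "f \<in> borel_measurable M" and nn: "\<And>x. x \<in> space M \<Longrightarrow> 0 \<le> f x"
  shows "ennreal (integral\<^sup>L M f) \<le> (\<integral>\<^sup>+x. ennreal (f x) \<partial>M)"
proof -
  have e: "integral\<^sup>L M f = enn2real (\<integral>\<^sup>+x. ennreal (f x) \<partial>M)" by (rule integral_enn2real[OF assms])
  show ?thesis
    by (cases "(\<integral>\<^sup>+x. ennreal (f x) \<partial>M) = \<top>") (auto simp: e top.not_eq_extremum)
qed

lemma Theta_box: "Theta P A = PiE {..<P} (\<lambda>j. if j \<in> A then UNIV else {0::real})"
proof (intro set_eqI iffI)
  fix b assume "b \<in> Theta P A"
  then have e: "b \<in> extensional {..<P}" and z: "\<forall>j<P. j \<notin> A \<longrightarrow> b j = 0"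
    unfolding Theta_def by (auto simp: PiE_iff)
  show "b \<in> PiE {..<P} (\<lambda>j. if j \<in> A then UNIV else {0::real})"
    unfolding PiE_iff using e z by simp
next
  fix b assume "b \<in> PiE {..<P} (\<lambda>j. if j \<in> A then UNIV else {0::real})"
  then have e: "b \<in> extensional {..<P}" and z: "\<forall>j<P. j \<notin> A \<longrightarrow> b j = 0"
    unfolding PiE_iff by (auto split: if_splits)
  show "b \<in> Theta P A"
    unfolding Theta_def PiE_iff using e z by simp
qed

lemma Theta_sets[measurable]: "Theta P A \<in> sets (PN P)"
  unfolding Theta_box by (intro sets_PiM_I_finite) auto

lemma far_sets: "{\<beta> \<in> space (PN P). r \<le> l2dist P \<beta> b0} \<in> sets (PN P)"
  unfolding l2dist_def by measurable

lemma far_Theta: "{\<beta>. r \<le> l2dist P \<beta> b0} \<inter> Theta P A = {\<beta> \<in> space (PN P). r \<le> l2dist P \<beta> b0} \<inter> Theta P A"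
  by (auto simp: Theta_def space_PiM)

lemma far_Theta_sets[measurable]: "{\<beta>. r \<le> l2dist P \<beta> b0} \<inter> Theta P A \<in> sets (PN P)"
  unfolding far_Theta using far_sets Theta_sets by blast

lemma lik_meas_b[measurable]: "(\<lambda>b. lik n P X \<sigma> b y) \<in> borel_measurable (PN P)"
  unfolding lik_def lin_pred_def normal_density_def by measurable

lemma lik_pos: "\<sigma> > 0 \<Longrightarrow> 0 < lik n P X \<sigma> \<beta> y"
  unfolding lik_def by (intro prod_pos) (auto intro: normal_density_pos)

lemma sets_data[measurable_cong]: "sets (data_measure n P X \<sigma> \<beta>) = sets (PN n)"
  unfolding data_measure_def by (intro sets_PiM_cong) auto

lemma space_data: "space (data_measure n P X \<sigma> \<beta>) = space (PN n)"
  using sets_data by (rule sets_eq_imp_space_eq)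

lemma prob_data: "\<sigma> > 0 \<Longrightarrow> prob_space (data_measure n P X \<sigma> \<beta>)"
  unfolding data_measure_def by (intro prob_space_PiM prob_space_normal_density)

lemma markov_half:
  fixes \<phi> :: "_ \<Rightarrow> real"
  assumes M: "finite_measure M" and \<phi>m: "\<phi> \<in> borel_measurable M" and \<phi>b: "\<And>y. 0 \<le> \<phi> y \<and> \<phi> y \<le> 1"
  shows "emeasure M {y \<in> space M. 1/2 \<le> \<phi> y} \<le> ennreal (2 * integral\<^sup>L M \<phi>)"
proof -
  interpret finite_measure M by fact
  have int: "integrable M \<phi>"
    by (rule integrable_const_bound[where B=1]) (use \<phi>b \<phi>m in auto)
  have "emeasure M {y \<in> space M. 1/2 \<le> \<phi> y} = (\<integral>\<^sup>+y. indicator {y \<in> space M. 1/2 \<le> \<phi> y} y \<partial>M)"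
    using \<phi>m by (intro nn_integral_indicator[symmetric]) measurable
  also have "\<dots> \<le> (\<integral>\<^sup>+y. ennreal (2 * \<phi> y) \<partial>M)"
    by (intro nn_integral_mono) (use \<phi>b in \<open>auto split: split_indicator\<close>)
  also have "\<dots> = ennreal (integral\<^sup>L M (\<lambda>y. 2 * \<phi> y))"
    using int \<phi>b by (intro nn_integral_eq_integral) auto
  finally show ?thesis by simp
qed

lemma core:
  fixes \<phi> :: "(nat \<Rightarrow> real) \<Rightarrow> real" and P n :: nat and A :: "nat set"
    and \<sigma>0 \<tau>0 ac bc \<sigma>\<eta> r \<tau> ex \<epsilon> :: real and z b0 :: "nat \<Rightarrow> real"
    and X :: "nat \<Rightarrow> nat \<Rightarrow> real"
  defines "Pi0 \<equiv> guided_prior P A \<sigma>0 \<tau>0 ac bc \<sigma>\<eta> z"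
  defines "Bs \<equiv> {\<beta>. r \<le> l2dist P \<beta> b0}"
  assumes \<sigma>0: "\<sigma>0 > 0" and A: "finite A" and pos: "\<tau>0 > 0" "ac > 0" "bc > 0"
   and \<phi>m: "\<phi> \<in> borel_measurable (PN n)" and \<phi>b: "\<And>y. 0 \<le> \<phi> y \<and> \<phi> y \<le> 1"
   and tail: "\<And>\<beta>. \<beta> \<in> Theta P A \<Longrightarrow> r \<le> l2dist P \<beta> b0 \<Longrightarrow> (\<integral>y. 1 - \<phi> y \<partial>data_measure n P X \<sigma>0 \<beta>) \<le> \<tau>"
   and \<tau>: "0 \<le> \<tau>"
   and \<Omega>s: "\<Omega> \<in> sets (PN n)"
   and ev: "\<And>y. y \<in> \<Omega> \<Longrightarrow> (\<integral>\<beta>. indicator (Theta P A) \<beta> * (lik n P X \<sigma>0 \<beta> y / lik n P X \<sigma>0 b0 y) \<partial>Pi0) \<ge> ex"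
   and ex: "ex > 0" and \<epsilon>: "\<epsilon> > 0"
   and S: "S \<in> sets (PN n)" "\<And>y. y \<in> S \<Longrightarrow> active_posterior n P X \<sigma>0 Pi0 A y Bs > \<epsilon>"
  shows "emeasure (data_measure n P X \<sigma>0 b0) S \<le> emeasure (data_measure n P X \<sigma>0 b0) (space (PN n) - \<Omega>)
     + ennreal (2 * (\<integral>y. \<phi> y \<partial>data_measure n P X \<sigma>0 b0)) + ennreal (2 / (\<epsilon> * ex)) * (ennreal \<tau> * hyperC ac bc)"
proof -
  let ?\<nu> = "data_measure n P X \<sigma>0 b0"
  let ?L = "\<lambda>\<beta> y. lik n P X \<sigma>0 \<beta> y"
  let ?T = "Theta P A"
  define S' where "S' = S \<inter> \<Omega> \<inter> {y \<in> space (PN n). \<phi> y < 1/2}"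
  have S'sets: "S' \<in> sets (PN n)" unfolding S'_def using S(1) \<Omega>s \<phi>m by measurable
  have Pi0_sets: "sets Pi0 = sets (PN P)" unfolding Pi0_def by (rule prior_sets)
  have Pi0_fin: "finite_measure Pi0" unfolding Pi0_def by (rule prior_finite[OF A pos])
  have Pi0_mass: "emeasure Pi0 (space Pi0) \<le> hyperC ac bc" unfolding Pi0_def by (rule prior_mass[OF A pos])
  have cover: "S \<subseteq> (space (PN n) - \<Omega>) \<union> {y \<in> space (PN n). 1/2 \<le> \<phi> y} \<union> S'"
    using sets.sets_into_space[OF S(1)] unfolding S'_def by auto
  define c where "c = \<epsilon> * ex / 2"
  have c: "c > 0" unfolding c_def using \<epsilon> ex by simp
  define Nn where "Nn y = (\<integral>\<^sup>+\<beta>. ennreal (indicator (Bs \<inter> ?T) \<beta> * ?L \<beta> y) \<partial>Pi0)" for y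
  have pw: "ennreal c * ennreal (?L b0 y) \<le> ennreal (1 - \<phi> y) * Nn y" if y: "y \<in> S'" for y
  proof -
    define Nr where "Nr = (\<integral>\<beta>. indicator (Bs \<inter> ?T) \<beta> * ?L \<beta> y \<partial>Pi0)"
    define Dr where "Dr = (\<integral>\<beta>. indicator ?T \<beta> * ?L \<beta> y \<partial>Pi0)"
    have L0: "?L b0 y > 0" by (rule lik_pos[OF \<sigma>0])
    have yS: "y \<in> S" "y \<in> \<Omega>" "\<phi> y < 1/2" using y unfolding S'_def by auto
    have E: "(\<integral>\<beta>. indicator ?T \<beta> * (?L \<beta> y / ?L b0 y) \<partial>Pi0) = Dr / ?L b0 y"
      unfolding Dr_def times_divide_eq_right by (rule integral_divide_zero)
    have "ex \<le> Dr / ?L b0 y" using ev[OF yS(2)] by (simp only: E)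
    then have D: "ex * ?L b0 y \<le> Dr" using L0 by (simp add: pos_le_divide_eq)
    have Dpos: "Dr > 0" using D ex L0 by (smt (verit) mult_pos_pos)
    have "\<epsilon> < Nr / Dr" using S(2)[OF yS(1)] unfolding active_posterior_def Nr_def Dr_def Bs_def by simp
    then have N1: "\<epsilon> * Dr < Nr" using Dpos by (simp add: pos_less_divide_eq)
    have Nnn: "0 \<le> Nr" unfolding Nr_def by (intro integral_nonneg_AE AE_I2) (simp add: lik_nonneg)
    have "\<epsilon> * (ex * ?L b0 y) \<le> \<epsilon> * Dr" using D \<epsilon> by simp
    with N1 have N2: "\<epsilon> * ex * ?L b0 y < Nr" by (simp add: mult.assoc)
    have "c * ?L b0 y \<le> (1 - \<phi> y) * Nr"
    proof -
      have "c * ?L b0 y = (\<epsilon> * ex * ?L b0 y) / 2" unfolding c_def by simp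
      also have "\<dots> \<le> Nr / 2" using N2 by simp
      also have "\<dots> \<le> (1 - \<phi> y) * Nr"
      proof -
        have "1/2 \<le> 1 - \<phi> y" using yS(3) by simp
        then have "(1/2) * Nr \<le> (1 - \<phi> y) * Nr" using Nnn by (rule mult_right_mono)
        then show ?thesis by simp
      qed
      finally show ?thesis .
    qed
    then have "ennreal (c * ?L b0 y) \<le> ennreal ((1 - \<phi> y) * Nr)" by (rule ennreal_leI)
    also have "\<dots> = ennreal (1 - \<phi> y) * ennreal Nr" using \<phi>b[of y] Nnn by (simp add: ennreal_mult)
    also have "ennreal Nr \<le> Nn y"
      unfolding Nr_def Nn_def
    proof (rule integral_le_nn)
      show "(\<lambda>\<beta>. indicator (Bs \<inter> ?T) \<beta> * ?L \<beta> y) \<in> borel_measurable Pi0"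
        unfolding measurable_cong_sets[OF Pi0_sets refl] Bs_def by measurable
    qed (simp add: lik_nonneg)
    then have "ennreal (1 - \<phi> y) * ennreal Nr \<le> ennreal (1 - \<phi> y) * Nn y" by (rule mult_left_mono) simp
    finally show ?thesis using c L0 by (simp add: ennreal_mult)
  qed
  have \<nu>sets: "sets ?\<nu> = sets (PN n)" by (rule sets_data)
  have \<nu>space: "space ?\<nu> = space (PN n)" by (rule space_data)
  have \<nu>prob: "prob_space ?\<nu>" by (rule prob_data[OF \<sigma>0])
  have lam_sf: "sigma_finite_measure (PN n)"
    by (rule product_sigma_finite.sigma_finite) (auto simp: product_sigma_finite_def lborel.sigma_finite_measure_axioms)
  have Pi0_sf: "sigma_finite_measure Pi0"
    using Pi0_fin by (rule finite_measure.sigma_finite_measure)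
  have psf: "pair_sigma_finite Pi0 (PN n)" by (rule pair_sigma_finite.intro[OF Pi0_sf lam_sf])
  have Fm: "(\<lambda>(\<beta>, y). ennreal (1 - \<phi> y) * ennreal (indicator (Bs \<inter> ?T) \<beta> * ?L \<beta> y)) \<in> borel_measurable (Pi0 \<Otimes>\<^sub>M PN n)"
  proof -
    have ss: "sets (Pi0 \<Otimes>\<^sub>M PN n) = sets (PN P \<Otimes>\<^sub>M PN n)"
      by (rule sets_pair_measure_cong[OF Pi0_sets refl])
    show ?thesis
      unfolding measurable_cong_sets[OF ss refl] Bs_def using \<phi>m by measurable
  qed
  have key: "ennreal c * emeasure ?\<nu> S' \<le> ennreal \<tau> * hyperC ac bc"
  proof -
    have "emeasure ?\<nu> S' = (\<integral>\<^sup>+y. ennreal (?L b0 y) * indicator S' y \<partial>PN n)"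
      unfolding data_density[OF \<sigma>0] using S'sets
      by (subst emeasure_density) (auto simp: nn_integral_set_ennreal intro!: nn_integral_cong)
    then have "ennreal c * emeasure ?\<nu> S' = (\<integral>\<^sup>+y. ennreal c * (ennreal (?L b0 y) * indicator S' y) \<partial>PN n)"
      using S'sets by (simp add: nn_integral_cmult)
    also have "\<dots> \<le> (\<integral>\<^sup>+y. ennreal (1 - \<phi> y) * Nn y \<partial>PN n)"
      by (intro nn_integral_mono) (auto simp: pw mult.assoc[symmetric] split: split_indicator)
    also have "\<dots> = (\<integral>\<^sup>+y. \<integral>\<^sup>+\<beta>. ennreal (1 - \<phi> y) * ennreal (indicator (Bs \<inter> ?T) \<beta> * ?L \<beta> y) \<partial>Pi0 \<partial>PN n)"
    proof (intro nn_integral_cong)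
      fix y
      have "(\<lambda>\<beta>. ennreal (indicator (Bs \<inter> ?T) \<beta> * ?L \<beta> y)) \<in> borel_measurable Pi0"
        unfolding measurable_cong_sets[OF Pi0_sets refl] Bs_def by measurable
      then show "ennreal (1 - \<phi> y) * Nn y = (\<integral>\<^sup>+\<beta>. ennreal (1 - \<phi> y) * ennreal (indicator (Bs \<inter> ?T) \<beta> * ?L \<beta> y) \<partial>Pi0)"
        unfolding Nn_def by (rule nn_integral_cmult[symmetric])
    qed
    also have "\<dots> = (\<integral>\<^sup>+\<beta>. \<integral>\<^sup>+y. ennreal (1 - \<phi> y) * ennreal (indicator (Bs \<inter> ?T) \<beta> * ?L \<beta> y) \<partial>PN n \<partial>Pi0)"
      by (rule pair_sigma_finite.Fubini'[OF psf Fm])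
    also have "\<dots> \<le> (\<integral>\<^sup>+\<beta>. ennreal \<tau> \<partial>Pi0)"
    proof (intro nn_integral_mono)
      fix \<beta>
      show "(\<integral>\<^sup>+y. ennreal (1 - \<phi> y) * ennreal (indicator (Bs \<inter> ?T) \<beta> * ?L \<beta> y) \<partial>PN n) \<le> ennreal \<tau>"
      proof (cases "\<beta> \<in> Bs \<inter> ?T")
        case False then show ?thesis by simp
      next
        case True
        have int: "integrable (data_measure n P X \<sigma>0 \<beta>) (\<lambda>y. 1 - \<phi> y)"
        proof -
          interpret pb: prob_space "data_measure n P X \<sigma>0 \<beta>" by (rule prob_data[OF \<sigma>0])
          show ?thesis
            by (rule pb.integrable_const_bound[where B=1]) (use \<phi>b \<phi>m in \<open>auto simp: measurable_cong_sets[OF sets_data refl]\<close>)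
        qed
        have "(\<integral>\<^sup>+y. ennreal (1 - \<phi> y) * ennreal (indicator (Bs \<inter> ?T) \<beta> * ?L \<beta> y) \<partial>PN n)
            = (\<integral>\<^sup>+y. ennreal (?L \<beta> y) * ennreal (1 - \<phi> y) \<partial>PN n)"
          using True by (intro nn_integral_cong) (simp add: mult.commute)
        also have "\<dots> = (\<integral>\<^sup>+y. ennreal (1 - \<phi> y) \<partial>data_measure n P X \<sigma>0 \<beta>)"
          unfolding data_density[OF \<sigma>0] using \<phi>m by (subst nn_integral_density) auto
        also have "\<dots> = ennreal (\<integral>y. 1 - \<phi> y \<partial>data_measure n P X \<sigma>0 \<beta>)"
          using int \<phi>b by (intro nn_integral_eq_integral) auto
        also have "\<dots> \<le> ennreal \<tau>"
          using True tail unfolding Bs_def by (auto intro: ennreal_leI)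
        finally show ?thesis .
      qed
    qed
    also have "\<dots> = ennreal \<tau> * emeasure Pi0 (space Pi0)" by simp
    also have "\<dots> \<le> ennreal \<tau> * hyperC ac bc" by (intro mult_left_mono Pi0_mass) simp
    finally show ?thesis .
  qed
  have S'b: "emeasure ?\<nu> S' \<le> ennreal (2 / (\<epsilon> * ex)) * (ennreal \<tau> * hyperC ac bc)"
  proof -
    have "emeasure ?\<nu> S' = ennreal (1 / c) * (ennreal c * emeasure ?\<nu> S')"
      using c by (simp add: ennreal_mult[symmetric] mult.assoc[symmetric])
    also have "\<dots> \<le> ennreal (1 / c) * (ennreal \<tau> * hyperC ac bc)"
      by (intro mult_left_mono key) simp
    also have "1 / c = 2 / (\<epsilon> * ex)" unfolding c_def by simp
    finally show ?thesis .
  qed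
  have half: "emeasure ?\<nu> {y \<in> space (PN n). 1/2 \<le> \<phi> y} \<le> ennreal (2 * (\<integral>y. \<phi> y \<partial>?\<nu>))"
  proof -
    have "\<phi> \<in> borel_measurable ?\<nu>" unfolding measurable_cong_sets[OF \<nu>sets refl] by (rule \<phi>m)
    from markov_half[OF prob_space.axioms(1)[OF \<nu>prob] this \<phi>b] show ?thesis unfolding \<nu>space .
  qed
  have m1: "space (PN n) - \<Omega> \<in> sets ?\<nu>" using \<Omega>s by (simp add: \<nu>sets)
  have m2: "{y \<in> space (PN n). 1/2 \<le> \<phi> y} \<in> sets ?\<nu>" unfolding \<nu>sets using \<phi>m by measurable
  have m3: "S' \<in> sets ?\<nu>" using S'sets by (simp add: \<nu>sets)
  have "emeasure ?\<nu> S \<le> emeasure ?\<nu> ((space (PN n) - \<Omega>) \<union> {y \<in> space (PN n). 1/2 \<le> \<phi> y} \<union> S')"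
    by (rule emeasure_mono[OF cover]) (use m1 m2 m3 in auto)
  also have "\<dots> \<le> emeasure ?\<nu> ((space (PN n) - \<Omega>) \<union> {y \<in> space (PN n). 1/2 \<le> \<phi> y}) + emeasure ?\<nu> S'"
    by (rule emeasure_subadditive) (use m1 m2 m3 in auto)
  also have "\<dots> \<le> emeasure ?\<nu> (space (PN n) - \<Omega>) + emeasure ?\<nu> {y \<in> space (PN n). 1/2 \<le> \<phi> y} + emeasure ?\<nu> S'"
    by (intro add_right_mono emeasure_subadditive m1 m2)
  also have "\<dots> \<le> emeasure ?\<nu> (space (PN n) - \<Omega>) + ennreal (2 * (\<integral>y. \<phi> y \<partial>?\<nu>)) + ennreal (2 / (\<epsilon> * ex)) * (ennreal \<tau> * hyperC ac bc)"
    by (intro add_mono half S'b order_refl)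
  finally show ?thesis .
qed

lemma prior_integral_meas:
  fixes F :: "'x \<Rightarrow> (nat \<Rightarrow> real) \<Rightarrow> real"
  assumes A: "finite A" and pos: "\<tau>0 > 0" "ac > 0" "bc > 0"
    and zf: "\<And>j. (\<lambda>x. zf x j) \<in> borel_measurable M"
    and F: "(\<lambda>(x, b). F x b) \<in> borel_measurable (M \<Otimes>\<^sub>M PN P)"
    and Fnn: "\<And>x b. 0 \<le> F x b"
  shows "(\<lambda>x. \<integral>b. F x b \<partial>guided_prior P A \<sigma>0 \<tau>0 ac bc \<sigma>\<eta> (zf x)) \<in> borel_measurable M"
proof -
  have eq: "(\<integral>b. F x b \<partial>guided_prior P A \<sigma>0 \<tau>0 ac bc \<sigma>\<eta> (zf x)) =
      enn2real (\<integral>\<^sup>+b. ennreal (F x b) \<partial>guided_prior P A \<sigma>0 \<tau>0 ac bc \<sigma>\<eta> (zf x))" if x: "x \<in> space M" for x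
  proof (rule integral_enn2real)
    show "F x \<in> borel_measurable (guided_prior P A \<sigma>0 \<tau>0 ac bc \<sigma>\<eta> (zf x))"
      unfolding measurable_cong_sets[OF prior_sets refl] using measurable_Pair2[OF F x] by simp
  qed (rule Fnn)
  have "(\<lambda>x. \<integral>\<^sup>+b. ennreal (F x b) \<partial>guided_prior P A \<sigma>0 \<tau>0 ac bc \<sigma>\<eta> (zf x)) \<in> borel_measurable M"
    by (rule prior_nn_meas[OF A pos zf]) (use F in measurable)
  then have "(\<lambda>x. enn2real (\<integral>\<^sup>+b. ennreal (F x b) \<partial>guided_prior P A \<sigma>0 \<tau>0 ac bc \<sigma>\<eta> (zf x))) \<in> borel_measurable M"
    by measurable
  then show ?thesis by (subst measurable_cong[OF eq]) auto
qed

lemma post_meas: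
  fixes Q :: "'w measure"
  assumes A: "finite A" and pos: "\<tau>0 > 0" "ac > 0" "bc > 0"
    and zf: "\<And>j. (\<lambda>\<omega>. zf \<omega> j) \<in> borel_measurable Q"
    and Bs: "Bs \<inter> Theta P A \<in> sets (PN P)"
  shows "(\<lambda>(\<omega>, y). active_posterior n P X \<sigma>0 (guided_prior P A \<sigma>0 \<tau>0 ac bc \<sigma>\<eta> (zf \<omega>)) A y Bs)
     \<in> borel_measurable (Q \<Otimes>\<^sub>M PN n)"
proof -
  have zf': "\<And>j. (\<lambda>x. zf (fst x) j) \<in> borel_measurable (Q \<Otimes>\<^sub>M PN n)"
    using zf by measurable
  have N: "(\<lambda>x. \<integral>b. indicator (Bs \<inter> Theta P A) b * lik n P X \<sigma>0 b (snd x) \<partial>guided_prior P A \<sigma>0 \<tau>0 ac bc \<sigma>\<eta> (zf (fst x)))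
     \<in> borel_measurable (Q \<Otimes>\<^sub>M PN n)"
    by (rule prior_integral_meas[OF A pos zf']) (use Bs in \<open>measurable, auto simp: lik_nonneg\<close>)
  have D: "(\<lambda>x. \<integral>b. indicator (Theta P A) b * lik n P X \<sigma>0 b (snd x) \<partial>guided_prior P A \<sigma>0 \<tau>0 ac bc \<sigma>\<eta> (zf (fst x)))
     \<in> borel_measurable (Q \<Otimes>\<^sub>M PN n)"
    by (rule prior_integral_meas[OF A pos zf']) (measurable, auto simp: lik_nonneg)
  show ?thesis unfolding active_posterior_def split_beta' using N D by measurable
qed

lemma Bad_sets:
  fixes Q :: "'w measure"
  assumes pos: "\<tau>0 > 0" "ac > 0" "bc > 0"
    and zf: "\<And>j. (\<lambda>\<omega>. zf \<omega> j) \<in> borel_measurable Q"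
    and Af: "\<And>A. {\<omega> \<in> space Q. Af \<omega> = A} \<in> sets Q"
    and Ar: "\<And>\<omega>. \<omega> \<in> space Q \<Longrightarrow> Af \<omega> \<subseteq> {..<P}"
    and Bs: "\<And>A. Bs \<inter> Theta P A \<in> sets (PN P)"
  shows "{(\<omega>, y) \<in> space (Q \<Otimes>\<^sub>M data_measure n P X \<sigma>0 b0).
      \<epsilon> < active_posterior n P X \<sigma>0 (guided_prior P (Af \<omega>) \<sigma>0 \<tau>0 ac bc \<sigma>\<eta> (zf \<omega>)) (Af \<omega>) y Bs}
      \<in> sets (Q \<Otimes>\<^sub>M data_measure n P X \<sigma>0 b0)"
proof -
  have ss: "sets (Q \<Otimes>\<^sub>M data_measure n P X \<sigma>0 b0) = sets (Q \<Otimes>\<^sub>M PN n)"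
    by (rule sets_pair_measure_cong[OF refl sets_data])
  have sp: "space (Q \<Otimes>\<^sub>M data_measure n P X \<sigma>0 b0) = space (Q \<Otimes>\<^sub>M PN n)"
    using ss by (rule sets_eq_imp_space_eq)
  let ?post = "\<lambda>A \<omega> y. active_posterior n P X \<sigma>0 (guided_prior P A \<sigma>0 \<tau>0 ac bc \<sigma>\<eta> (zf \<omega>)) A y Bs"
  have eq: "{(\<omega>, y) \<in> space (Q \<Otimes>\<^sub>M data_measure n P X \<sigma>0 b0). \<epsilon> < ?post (Af \<omega>) \<omega> y} =
     (\<Union>A\<in>Pow {..<P}. {x \<in> space (Q \<Otimes>\<^sub>M PN n). fst x \<in> {\<omega> \<in> space Q. Af \<omega> = A}} \<inter>
        {x \<in> space (Q \<Otimes>\<^sub>M PN n). \<epsilon> < (\<lambda>(\<omega>, y). ?post A \<omega> y) x})"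
    unfolding sp using Ar by (auto simp: space_pair_measure)
  have "(\<Union>A\<in>Pow {..<P}. {x \<in> space (Q \<Otimes>\<^sub>M PN n). fst x \<in> {\<omega> \<in> space Q. Af \<omega> = A}} \<inter>
        {x \<in> space (Q \<Otimes>\<^sub>M PN n). \<epsilon> < (\<lambda>(\<omega>, y). ?post A \<omega> y) x}) \<in> sets (Q \<Otimes>\<^sub>M PN n)"
  proof (intro sets.finite_UN sets.Int)
    fix A assume A: "A \<in> Pow {..<P}"
    then have fA: "finite A" by (auto intro: finite_subset)
    have pm: "(\<lambda>(\<omega>, y). ?post A \<omega> y) \<in> borel_measurable (Q \<Otimes>\<^sub>M PN n)"
      by (rule post_meas[OF fA pos zf Bs])
    show "{x \<in> space (Q \<Otimes>\<^sub>M PN n). \<epsilon> < (\<lambda>(\<omega>, y). ?post A \<omega> y) x} \<in> sets (Q \<Otimes>\<^sub>M PN n)"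
      using pm by measurable
    have "fst \<in> measurable (Q \<Otimes>\<^sub>M PN n) Q" by measurable
    from measurable_sets[OF this Af[of A]]
    have "fst -` {\<omega> \<in> space Q. Af \<omega> = A} \<inter> space (Q \<Otimes>\<^sub>M PN n) \<in> sets (Q \<Otimes>\<^sub>M PN n)" .
    moreover have "{x \<in> space (Q \<Otimes>\<^sub>M PN n). fst x \<in> {\<omega> \<in> space Q. Af \<omega> = A}} = fst -` {\<omega> \<in> space Q. Af \<omega> = A} \<inter> space (Q \<Otimes>\<^sub>M PN n)"
      by auto
    ultimately show "{x \<in> space (Q \<Otimes>\<^sub>M PN n). fst x \<in> {\<omega> \<in> space Q. Af \<omega> = A}} \<in> sets (Q \<Otimes>\<^sub>M PN n)"
      by simp
  qed auto
  then show ?thesis unfolding eq ss .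
qed

lemma final_limit:
  fixes Q :: "'w measure" and \<nu> :: "nat \<Rightarrow> 'y measure"
    and Bad :: "nat \<Rightarrow> ('w \<times> 'y) set" and G :: "nat \<Rightarrow> 'w set"
  assumes Q: "prob_space Q" and \<nu>: "\<And>n. prob_space (\<nu> n)"
    and Bad: "\<And>n. Bad n \<in> sets (Q \<Otimes>\<^sub>M \<nu> n)"
    and G: "\<And>n. G n \<in> sets Q"
    and Gc: "(\<lambda>n. measure Q (space Q - G n)) \<longlonglongrightarrow> 0"
    and pw: "\<And>\<omega>. \<omega> \<in> space Q \<Longrightarrow> (\<lambda>n. indicator (G n) \<omega> * measure (\<nu> n) (Pair \<omega> -` Bad n)) \<longlonglongrightarrow> 0"
    and e: "e > 0"
  shows "\<forall>\<^sub>F n in sequentially. \<exists>E \<in> sets (Q \<Otimes>\<^sub>M \<nu> n). Bad n \<subseteq> E \<and> measure (Q \<Otimes>\<^sub>M \<nu> n) E < e"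
proof -
  interpret Q: prob_space Q by fact
  define h where "h n \<omega> = indicator (G n) \<omega> * measure (\<nu> n) (Pair \<omega> -` Bad n)" for n \<omega>
  have hm: "h n \<in> borel_measurable Q" for n
  proof -
    interpret V: prob_space "\<nu> n" by (rule \<nu>)
    have "(\<lambda>\<omega>. emeasure (\<nu> n) (Pair \<omega> -` Bad n)) \<in> borel_measurable Q"
      by (rule V.measurable_emeasure_Pair[OF Bad])
    then have "(\<lambda>\<omega>. measure (\<nu> n) (Pair \<omega> -` Bad n)) \<in> borel_measurable Q"
      unfolding measure_def by measurable
    then show ?thesis unfolding h_def using G by measurable
  qed
  have hb: "\<bar>h n \<omega>\<bar> \<le> 1" for n \<omega>
  proof -
    interpret V: prob_space "\<nu> n" by (rule \<nu>)
    show ?thesis unfolding h_def by (auto simp: indicator_def V.prob_le_1)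
  qed
  have hint: "integrable Q (h n)" for n
    by (rule Q.integrable_const_bound[where B=1]) (use hb hm in auto)
  have lim_h: "(\<lambda>n. integral\<^sup>L Q (h n)) \<longlonglongrightarrow> integral\<^sup>L Q (\<lambda>\<omega>. 0)"
  proof (rule integral_dominated_convergence[where w="\<lambda>_. 1"])
    show "(\<lambda>\<omega>. 0::real) \<in> borel_measurable Q" by simp
    show "h n \<in> borel_measurable Q" for n by (rule hm)
    show "integrable Q (\<lambda>_. 1::real)" by simp
    show "AE \<omega> in Q. (\<lambda>n. h n \<omega>) \<longlonglongrightarrow> 0" using pw unfolding h_def by (intro AE_I2) auto
    show "AE \<omega> in Q. norm (h n \<omega>) \<le> 1" for n using hb by auto
  qed
  then have lim_h0: "(\<lambda>n. integral\<^sup>L Q (h n)) \<longlonglongrightarrow> 0" by simp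
  have meas_eq: "measure (Q \<Otimes>\<^sub>M \<nu> n) (Bad n \<inter> (G n \<times> space (\<nu> n))) = integral\<^sup>L Q (h n)" for n
  proof -
    interpret V: prob_space "\<nu> n" by (rule \<nu>)
    have X: "Bad n \<inter> (G n \<times> space (\<nu> n)) \<in> sets (Q \<Otimes>\<^sub>M \<nu> n)" using Bad G by auto
    have "emeasure (Q \<Otimes>\<^sub>M \<nu> n) (Bad n \<inter> (G n \<times> space (\<nu> n))) =
        (\<integral>\<^sup>+\<omega>. emeasure (\<nu> n) (Pair \<omega> -` (Bad n \<inter> (G n \<times> space (\<nu> n)))) \<partial>Q)"
      by (rule V.emeasure_pair_measure_alt[OF X])
    also have "\<dots> = (\<integral>\<^sup>+\<omega>. ennreal (h n \<omega>) \<partial>Q)"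
    proof (intro nn_integral_cong)
      fix \<omega> assume \<omega>: "\<omega> \<in> space Q"
      have sub: "Pair \<omega> -` Bad n \<subseteq> space (\<nu> n)"
        using sets.sets_into_space[OF Bad[of n]] by (auto simp: space_pair_measure)
      show "emeasure (\<nu> n) (Pair \<omega> -` (Bad n \<inter> (G n \<times> space (\<nu> n)))) = ennreal (h n \<omega>)"
      proof (cases "\<omega> \<in> G n")
        case True
        then have "Pair \<omega> -` (Bad n \<inter> (G n \<times> space (\<nu> n))) = Pair \<omega> -` Bad n" using sub by auto
        then show ?thesis using True by (simp add: h_def V.emeasure_eq_measure)
      next
        case False then show ?thesis by (simp add: h_def)
      qed
    qed
    also have "\<dots> = ennreal (integral\<^sup>L Q (h n))"
      by (rule nn_integral_eq_integral[OF hint]) (auto simp: h_def)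
    finally have "emeasure (Q \<Otimes>\<^sub>M \<nu> n) (Bad n \<inter> (G n \<times> space (\<nu> n))) = ennreal (integral\<^sup>L Q (h n))" .
    moreover have "0 \<le> integral\<^sup>L Q (h n)" by (intro integral_nonneg_AE AE_I2) (auto simp: h_def)
    ultimately show ?thesis by (simp add: measure_def)
  qed
  have meas_c: "measure (Q \<Otimes>\<^sub>M \<nu> n) ((space Q - G n) \<times> space (\<nu> n)) = measure Q (space Q - G n)" for n
  proof -
    interpret V: prob_space "\<nu> n" by (rule \<nu>)
    have "emeasure (Q \<Otimes>\<^sub>M \<nu> n) ((space Q - G n) \<times> space (\<nu> n)) = emeasure Q (space Q - G n) * emeasure (\<nu> n) (space (\<nu> n))"
      by (rule V.emeasure_pair_measure_Times) (use G in auto)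
    then show ?thesis by (simp add: measure_def V.emeasure_space_1)
  qed
  have "(\<lambda>n. integral\<^sup>L Q (h n) + measure Q (space Q - G n)) \<longlonglongrightarrow> 0 + 0"
    by (intro tendsto_add lim_h0 Gc)
  then have ev: "\<forall>\<^sub>F n in sequentially. integral\<^sup>L Q (h n) + measure Q (space Q - G n) < e"
    using e by (auto simp: order_tendsto_iff)
  show ?thesis
  proof (rule eventually_mono[OF ev], intro bexI conjI)
    fix n assume lt: "integral\<^sup>L Q (h n) + measure Q (space Q - G n) < e"
    interpret V: prob_space "\<nu> n" by (rule \<nu>)
    have fQV: "finite_measure (Q \<Otimes>\<^sub>M \<nu> n)"
      by (rule finite_measure_pair_measure) (use \<nu>[of n] Q in \<open>auto intro: prob_space.axioms(1)\<close>)
    let ?E = "Bad n \<union> ((space Q - G n) \<times> space (\<nu> n))"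
    show "Bad n \<subseteq> ?E" by auto
    show E: "?E \<in> sets (Q \<Otimes>\<^sub>M \<nu> n)" using Bad G by auto
    have Eeq: "?E = (Bad n \<inter> (G n \<times> space (\<nu> n))) \<union> ((space Q - G n) \<times> space (\<nu> n))"
      using sets.sets_into_space[OF Bad[of n]] by (auto simp: space_pair_measure)
    have s1: "Bad n \<inter> (G n \<times> space (\<nu> n)) \<in> sets (Q \<Otimes>\<^sub>M \<nu> n)" using Bad G by auto
    have s2: "(space Q - G n) \<times> space (\<nu> n) \<in> sets (Q \<Otimes>\<^sub>M \<nu> n)" using G by auto
    have "measure (Q \<Otimes>\<^sub>M \<nu> n) ?E \<le> measure (Q \<Otimes>\<^sub>M \<nu> n) (Bad n \<inter> (G n \<times> space (\<nu> n))) + measure (Q \<Otimes>\<^sub>M \<nu> n) ((space Q - G n) \<times> space (\<nu> n))"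
      unfolding Eeq by (rule measure_subadditive[OF s1 s2]) (simp_all add: finite_measure.emeasure_finite[OF fQV])
    also have "\<dots> < e" using lt by (simp add: meas_eq meas_c)
    finally show "measure (Q \<Otimes>\<^sub>M \<nu> n) ?E < e" .
  qed
qed

lemma level_sets:
  fixes Q :: "'w measure" and P :: nat
  assumes Af: "\<And>A. {\<omega> \<in> space Q. Af \<omega> = A} \<in> sets Q"
    and Ar: "\<And>\<omega>. \<omega> \<in> space Q \<Longrightarrow> Af \<omega> \<subseteq> {..<P}"
  shows "{\<omega> \<in> space Q. Pp (Af \<omega>)} \<in> sets Q"
proof -
  have "{\<omega> \<in> space Q. Pp (Af \<omega>)} = (\<Union>A\<in>{A. A \<in> Pow {..<P} \<and> Pp A}. {\<omega> \<in> space Q. Af \<omega> = A})"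
    using Ar by auto
  also have "\<dots> \<in> sets Q"
  proof (intro sets.finite_UN)
    show "finite {A. A \<in> Pow {..<P} \<and> Pp A}"
      by (rule finite_subset[of _ "Pow {..<P}"]) auto
  qed (use Af in auto)
  finally show ?thesis .
qed

theorem theorem3:
  fixes Q :: "'w measure"
    and p :: "nat \<Rightarrow> nat"
    and X :: "nat \<Rightarrow> nat \<Rightarrow> nat \<Rightarrow> real"
    and \<beta>0 :: "nat \<Rightarrow> nat \<Rightarrow> real"
    and \<sigma>0 \<tau>0 ac bc \<sigma>\<eta> \<phi>0 K Cz B C CF CD :: real
    and z bhat :: "nat \<Rightarrow> 'w \<Rightarrow> nat \<Rightarrow> real"
    and An :: "nat \<Rightarrow> 'w \<Rightarrow> nat set"
    and t u r q L :: "nat \<Rightarrow> real"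
    and cT :: "real \<Rightarrow> real"
  defines "S0 \<equiv> \<lambda>n. supp (p n) (\<beta>0 n)"
    and "s0 \<equiv> \<lambda>n. real (card (supp (p n) (\<beta>0 n)))"
    and "m \<equiv> \<lambda>n. C * real (card (supp (p n) (\<beta>0 n))) * L n"
    and "eps \<equiv> \<lambda>n. sqrt (real (card (supp (p n) (\<beta>0 n)))
                       * ln (C * real (card (supp (p n) (\<beta>0 n))) * L n) / real n)"
    and "Pr \<equiv> \<lambda>n A \<omega>. guided_prior (p n) A \<sigma>0 \<tau>0 ac bc \<sigma>\<eta> (z n \<omega>)"
    and "Pb \<equiv> \<lambda>n \<beta>. data_measure n (p n) (X n) \<sigma>0 \<beta>"
  assumes Q: "prob_space Q"
    and sigma0: "\<sigma>0 > 0"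
    \<comment> \<open>screening quantities are measurable w.r.t. the auxiliary (screening) data\<close>
    and meas_z: "\<And>n j. (\<lambda>\<omega>. z n \<omega> j) \<in> borel_measurable Q"
    and meas_bhat: "\<And>n j. (\<lambda>\<omega>. bhat n \<omega> j) \<in> borel_measurable Q"
    and meas_A: "\<And>n A. {\<omega> \<in> space Q. An n \<omega> = A} \<in> sets Q"
    and A_range: "\<And>n \<omega>. \<omega> \<in> space Q \<Longrightarrow> An n \<omega> \<subseteq> {..<p n}"
    \<comment> \<open>(A1)\<close>
    and A1a: "(\<lambda>n. s0 n * ln (real (p n)) / real n) \<longlonglongrightarrow> 0"
    and A1b: "filterlim (\<lambda>n. s0 n * ln (real (p n))) at_top sequentially"
    \<comment> \<open>(A2)\<close>
    and A2: "\<phi>0 > 0" "K \<ge> 1"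
      "\<And>n v. real (card (supp (p n) v)) \<le> K * s0 n \<Longrightarrow>
         (l2norm n (lin_pred (X n) (p n) v))^2 \<ge> real n * \<phi>0^2 * (l2norm (p n) v)^2"
    \<comment> \<open>(A4)\<close>
    and A4: "\<And>n \<omega> j. \<omega> \<in> space Q \<Longrightarrow> j < p n \<Longrightarrow> \<bar>z n \<omega> j\<bar> \<le> Cz"
    \<comment> \<open>(A5)\<close>
    and A5: "\<And>n j. j \<in> S0 n \<Longrightarrow> \<bar>\<beta>0 n j\<bar> \<le> B"
    \<comment> \<open>(A6)\<close>
    and A6: "\<tau>0 > 0" "ac > 0" "bc > 0" "\<sigma>\<eta> > 0"
    \<comment> \<open>(A9)\<close>
    and A9: "filterlim (\<lambda>n. real (p n)) at_top sequentially"
      "(\<lambda>n. ln (real (p n)) / real n) \<longlonglongrightarrow> 0"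
    \<comment> \<open>(A11)\<close>
    and A11: "\<exists>Cop. \<forall>\<^sub>F n in sequentially. \<forall>v.
       l2norm n (lin_pred (X n) (p n) v) \<le> Cop * sqrt (real n) * l2norm (p n) v"
    \<comment> \<open>(B1)\<close>
    and B1: "\<And>n \<omega>. \<omega> \<in> space Q \<Longrightarrow>
       {j. j < p n \<and> \<bar>bhat n \<omega> j\<bar> > t n} \<union> {j. j < p n \<and> z n \<omega> j > u n} \<subseteq> An n \<omega>"
    \<comment> \<open>(B2)\<close>
    and B2: "\<And>n. r n > t n" "\<And>n. q n > u n"
      "(\<lambda>n. measure Q {\<omega> \<in> space Q. \<forall>j \<in> S0 n. \<bar>bhat n \<omega> j\<bar> \<ge> r n}) \<longlonglongrightarrow> 1"
      "(\<lambda>n. measure Q {\<omega> \<in> space Q. \<forall>j \<in> S0 n. z n \<omega> j \<ge> q n}) \<longlonglongrightarrow> 1"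
    \<comment> \<open>(B3)\<close>
    and B3: "C > 0" "\<exists>(k::nat) c. \<forall>\<^sub>F n in sequentially. L n \<le> c * (ln (real (p n)))^k"
      "(\<lambda>n. measure Q {\<omega> \<in> space Q. real (card (An n \<omega>)) \<le> C * s0 n * L n}) \<longlonglongrightarrow> 1"
    \<comment> \<open>(B4)\<close>
    and B4: "\<exists>M0. \<forall>M \<ge> M0. \<exists>\<phi> :: nat \<Rightarrow> (nat \<Rightarrow> real) \<Rightarrow> real.
       (\<forall>n. \<phi> n \<in> borel_measurable (Pb n (\<beta>0 n)) \<and> (\<forall>y. 0 \<le> \<phi> n y \<and> \<phi> n y \<le> 1)) \<and>
       (\<lambda>n. \<integral>y. \<phi> n y \<partial>(Pb n (\<beta>0 n))) \<longlonglongrightarrow> 0 \<and>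
       (\<forall>\<^sub>F n in sequentially. \<forall>A \<in> active_sets (p n) (S0 n) (m n). \<forall>\<beta> \<in> Theta (p n) A.
          l2dist (p n) \<beta> (\<beta>0 n) \<ge> M * eps n \<longrightarrow>
          (\<integral>y. 1 - \<phi> n y \<partial>(Pb n \<beta>)) \<le> exp (- cT M * real n * (eps n)^2))"
    and s0logm: "filterlim (\<lambda>n. s0 n * ln (m n)) at_top sequentially"
    \<comment> \<open>sieve / prior mass condition\<close>
    and CF: "CF > 0"
      "\<And>n \<omega> A. \<omega> \<in> space Q \<Longrightarrow> A \<in> active_sets (p n) (S0 n) (m n) \<Longrightarrow>
         \<exists>F \<in> sets (param_space (p n)). F \<subseteq> Theta (p n) A \<and>
           measure (Pr n A \<omega>) (space (param_space (p n)) - F) \<le> exp (- CF * real n * (eps n)^2)"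
    \<comment> \<open>evidence lower bound\<close>
    and CD: "CD > 0"
      "\<And>\<delta>. \<delta> > 0 \<Longrightarrow> \<exists>\<Omega> :: nat \<Rightarrow> 'w \<Rightarrow> nat set \<Rightarrow> (nat \<Rightarrow> real) set.
         (\<forall>n \<omega> A. \<Omega> n \<omega> A \<in> sets (Pb n (\<beta>0 n))) \<and>
         (\<forall>\<omega> \<in> space Q. \<forall>e > 0. \<forall>\<^sub>F n in sequentially. \<forall>A \<in> active_sets (p n) (S0 n) (m n).
            measure (Pb n (\<beta>0 n)) (space (Pb n (\<beta>0 n)) - \<Omega> n \<omega> A) < e) \<and>
         (\<forall>n. \<forall>\<omega> \<in> space Q. \<forall>A \<in> active_sets (p n) (S0 n) (m n). \<forall>y \<in> \<Omega> n \<omega> A.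
            (\<integral>\<beta>. indicator (Theta (p n) A) \<beta> *
                 (lik n (p n) (X n) \<sigma>0 \<beta> y / lik n (p n) (X n) \<sigma>0 (\<beta>0 n) y) \<partial>(Pr n A \<omega>))
              \<ge> exp (- (CD + \<delta>) * real n * (eps n)^2))"
    and gap: "\<exists>M0. \<forall>M \<ge> M0. min (cT M) CF > CD"
  shows "\<exists>M0. \<forall>M \<ge> M0. \<forall>\<epsilon> > 0. \<forall>e > 0. \<forall>\<^sub>F n in sequentially.
     \<exists>E \<in> sets (Q \<Otimes>\<^sub>M Pb n (\<beta>0 n)).
       {(\<omega>, y) \<in> space (Q \<Otimes>\<^sub>M Pb n (\<beta>0 n)).
          active_posterior n (p n) (X n) \<sigma>0 (Pr n (An n \<omega>) \<omega>) (An n \<omega>) y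
            {\<beta>. l2dist (p n) \<beta> (\<beta>0 n) \<ge> M * eps n} > \<epsilon>} \<subseteq> E
       \<and> measure (Q \<Otimes>\<^sub>M Pb n (\<beta>0 n)) E < e"
proof -
  interpret Qp: prob_space Q by (rule Q)
  obtain M1 where M1: "\<forall>M\<ge>M1. min (cT M) CF > CD" using gap by blast
  obtain M2 where M2: "\<forall>M \<ge> M2. \<exists>\<phi> :: nat \<Rightarrow> (nat \<Rightarrow> real) \<Rightarrow> real.
       (\<forall>n. \<phi> n \<in> borel_measurable (Pb n (\<beta>0 n)) \<and> (\<forall>y. 0 \<le> \<phi> n y \<and> \<phi> n y \<le> 1)) \<and>
       (\<lambda>n. \<integral>y. \<phi> n y \<partial>(Pb n (\<beta>0 n))) \<longlonglongrightarrow> 0 \<and>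
       (\<forall>\<^sub>F n in sequentially. \<forall>A \<in> active_sets (p n) (S0 n) (m n). \<forall>\<beta> \<in> Theta (p n) A.
          l2dist (p n) \<beta> (\<beta>0 n) \<ge> M * eps n \<longrightarrow>
          (\<integral>y. 1 - \<phi> n y \<partial>(Pb n \<beta>)) \<le> exp (- cT M * real n * (eps n)^2))"
    using B4 by blast
  have main: "\<forall>\<^sub>F n in sequentially.
     \<exists>E \<in> sets (Q \<Otimes>\<^sub>M Pb n (\<beta>0 n)).
       {(\<omega>, y) \<in> space (Q \<Otimes>\<^sub>M Pb n (\<beta>0 n)).
          active_posterior n (p n) (X n) \<sigma>0 (Pr n (An n \<omega>) \<omega>) (An n \<omega>) y
            {\<beta>. l2dist (p n) \<beta> (\<beta>0 n) \<ge> M * eps n} > \<epsilon>} \<subseteq> E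
       \<and> measure (Q \<Otimes>\<^sub>M Pb n (\<beta>0 n)) E < e"
    if M: "max M1 M2 \<le> M" and \<epsilon>: "\<epsilon> > 0" and e: "e > 0" for M \<epsilon> e
  proof -
    have cTM: "cT M > CD" using M1 M by auto
    have "M2 \<le> M" using M by simp
    from M2[rule_format, OF this] obtain \<phi> :: "nat \<Rightarrow> (nat \<Rightarrow> real) \<Rightarrow> real" where \<phi>all:
       "(\<forall>n. \<phi> n \<in> borel_measurable (Pb n (\<beta>0 n)) \<and> (\<forall>y. 0 \<le> \<phi> n y \<and> \<phi> n y \<le> 1)) \<and>
       (\<lambda>n. \<integral>y. \<phi> n y \<partial>(Pb n (\<beta>0 n))) \<longlonglongrightarrow> 0 \<and>
       (\<forall>\<^sub>F n in sequentially. \<forall>A \<in> active_sets (p n) (S0 n) (m n). \<forall>\<beta> \<in> Theta (p n) A.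
          l2dist (p n) \<beta> (\<beta>0 n) \<ge> M * eps n \<longrightarrow>
          (\<integral>y. 1 - \<phi> n y \<partial>(Pb n \<beta>)) \<le> exp (- cT M * real n * (eps n)^2))"
      by (elim exE) (rule that)
    have \<phi>m: "\<And>n. \<phi> n \<in> borel_measurable (Pb n (\<beta>0 n))" and \<phi>b: "\<And>n y. 0 \<le> \<phi> n y \<and> \<phi> n y \<le> 1"
      and \<phi>lim: "(\<lambda>n. \<integral>y. \<phi> n y \<partial>(Pb n (\<beta>0 n))) \<longlonglongrightarrow> 0"
      and \<phi>tail: "\<forall>\<^sub>F n in sequentially. \<forall>A \<in> active_sets (p n) (S0 n) (m n). \<forall>\<beta> \<in> Theta (p n) A.
          l2dist (p n) \<beta> (\<beta>0 n) \<ge> M * eps n \<longrightarrow>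
          (\<integral>y. 1 - \<phi> n y \<partial>(Pb n \<beta>)) \<le> exp (- cT M * real n * (eps n)^2)"
      using \<phi>all by blast+
    define \<delta> where "\<delta> = (cT M - CD) / 2"
    have \<delta>: "\<delta> > 0" using cTM by (simp add: \<delta>_def)
    obtain \<Omega> :: "nat \<Rightarrow> 'w \<Rightarrow> nat set \<Rightarrow> (nat \<Rightarrow> real) set" where \<Omega>all:
         "(\<forall>n \<omega> A. \<Omega> n \<omega> A \<in> sets (Pb n (\<beta>0 n))) \<and>
         (\<forall>\<omega> \<in> space Q. \<forall>e > 0. \<forall>\<^sub>F n in sequentially. \<forall>A \<in> active_sets (p n) (S0 n) (m n).
            measure (Pb n (\<beta>0 n)) (space (Pb n (\<beta>0 n)) - \<Omega> n \<omega> A) < e) \<and>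
         (\<forall>n. \<forall>\<omega> \<in> space Q. \<forall>A \<in> active_sets (p n) (S0 n) (m n). \<forall>y \<in> \<Omega> n \<omega> A.
            (\<integral>\<beta>. indicator (Theta (p n) A) \<beta> *
                 (lik n (p n) (X n) \<sigma>0 \<beta> y / lik n (p n) (X n) \<sigma>0 (\<beta>0 n) y) \<partial>(Pr n A \<omega>))
              \<ge> exp (- (CD + \<delta>) * real n * (eps n)^2))"
      using CD(2)[OF \<delta>] by (elim exE) (rule that)
    have \<Omega>s: "\<And>n \<omega> A. \<Omega> n \<omega> A \<in> sets (Pb n (\<beta>0 n))" using \<Omega>all by blast
    have \<Omega>c: "\<forall>\<omega> \<in> space Q. \<forall>e > 0. \<forall>\<^sub>F n in sequentially. \<forall>A \<in> active_sets (p n) (S0 n) (m n).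
            measure (Pb n (\<beta>0 n)) (space (Pb n (\<beta>0 n)) - \<Omega> n \<omega> A) < e" using \<Omega>all by blast
    have \<Omega>ev: "\<And>n \<omega> A y. \<omega> \<in> space Q \<Longrightarrow> A \<in> active_sets (p n) (S0 n) (m n) \<Longrightarrow> y \<in> \<Omega> n \<omega> A \<Longrightarrow>
            (\<integral>\<beta>. indicator (Theta (p n) A) \<beta> *
                 (lik n (p n) (X n) \<sigma>0 \<beta> y / lik n (p n) (X n) \<sigma>0 (\<beta>0 n) y) \<partial>(Pr n A \<omega>))
              \<ge> exp (- (CD + \<delta>) * real n * (eps n)^2)"
      using \<Omega>all by blast
    define G where "G n = {\<omega> \<in> space Q. An n \<omega> \<in> active_sets (p n) (S0 n) (m n)}" for n
    define Bad where "Bad n = {(\<omega>, y) \<in> space (Q \<Otimes>\<^sub>M Pb n (\<beta>0 n)).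
          active_posterior n (p n) (X n) \<sigma>0 (Pr n (An n \<omega>) \<omega>) (An n \<omega>) y
            {\<beta>. l2dist (p n) \<beta> (\<beta>0 n) \<ge> M * eps n} > \<epsilon>}" for n
    have probPb: "prob_space (Pb n (\<beta>0 n))" for n unfolding Pb_def by (rule prob_data[OF sigma0])
    have Bad_s: "Bad n \<in> sets (Q \<Otimes>\<^sub>M Pb n (\<beta>0 n))" for n
      unfolding Bad_def Pr_def Pb_def
      by (rule Bad_sets[OF A6(1-3) meas_z meas_A A_range]) (auto intro: far_Theta_sets)
    have G_s: "G n \<in> sets Q" for n unfolding G_def by (rule level_sets[OF meas_A A_range])
    have Gc: "(\<lambda>n. measure Q (space Q - G n)) \<longlonglongrightarrow> 0"
    proof -
      define E1 where "E1 n = {\<omega> \<in> space Q. \<forall>j \<in> S0 n. \<bar>bhat n \<omega> j\<bar> \<ge> r n}" for n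
      define E3 where "E3 n = {\<omega> \<in> space Q. real (card (An n \<omega>)) \<le> C * s0 n * L n}" for n
      have finS0: "finite (S0 n)" for n unfolding S0_def supp_def by auto
      have E1s: "E1 n \<in> sets Q" for n
      proof -
        have "E1 n = space Q \<inter> (\<Inter>j\<in>S0 n. {\<omega> \<in> space Q. r n \<le> \<bar>bhat n \<omega> j\<bar>})"
          unfolding E1_def by auto
        also have "\<dots> \<in> sets Q"
        proof (cases "S0 n = {}")
          case True then show ?thesis by simp
        next
          case False
          have "(\<Inter>j\<in>S0 n. {\<omega> \<in> space Q. r n \<le> \<bar>bhat n \<omega> j\<bar>}) \<in> sets Q"
            using finS0 False meas_bhat by (intro sets.finite_INT) measurable
          then show ?thesis by auto
        qed
        finally show ?thesis .
      qed
      have E3s: "E3 n \<in> sets Q" for n unfolding E3_def by (rule level_sets[OF meas_A A_range])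
      have sub: "space Q - G n \<subseteq> (space Q - E1 n) \<union> (space Q - E3 n)" for n
      proof
        fix \<omega> assume \<omega>: "\<omega> \<in> space Q - G n"
        show "\<omega> \<in> (space Q - E1 n) \<union> (space Q - E3 n)"
        proof (rule ccontr)
          assume "\<omega> \<notin> (space Q - E1 n) \<union> (space Q - E3 n)"
          then have w1: "\<omega> \<in> E1 n" and w3: "\<omega> \<in> E3 n" using \<omega> by auto
          have "S0 n \<subseteq> An n \<omega>"
          proof
            fix j assume j: "j \<in> S0 n"
            then have "j < p n" unfolding S0_def supp_def by auto
            moreover have "\<bar>bhat n \<omega> j\<bar> > t n" using w1 j B2(1)[of n] unfolding E1_def by fastforce
            ultimately show "j \<in> An n \<omega>" using B1[of \<omega> n] \<omega> by auto
          qed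
          moreover have "An n \<omega> \<subseteq> {..<p n}" using A_range \<omega> by auto
          moreover have "real (card (An n \<omega>)) \<le> m n" using w3 unfolding E3_def m_def s0_def by auto
          ultimately have "\<omega> \<in> G n" using \<omega> unfolding G_def active_sets_def by auto
          then show False using \<omega> by auto
        qed
      qed
      have le: "measure Q (space Q - G n) \<le> (1 - measure Q (E1 n)) + (1 - measure Q (E3 n))" for n
      proof -
        have "measure Q (space Q - G n) \<le> measure Q ((space Q - E1 n) \<union> (space Q - E3 n))"
          using sub[of n] E1s E3s by (intro Qp.finite_measure_mono) auto
        also have "\<dots> \<le> measure Q (space Q - E1 n) + measure Q (space Q - E3 n)"
          using E1s E3s by (intro measure_subadditive) (auto simp: Qp.emeasure_finite)
        also have "\<dots> = (1 - measure Q (E1 n)) + (1 - measure Q (E3 n))"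
          using E1s E3s by (simp add: Qp.prob_compl)
        finally show ?thesis .
      qed
      have l1: "(\<lambda>n. measure Q (E1 n)) \<longlonglongrightarrow> 1" unfolding E1_def using B2(3) .
      have l3: "(\<lambda>n. measure Q (E3 n)) \<longlonglongrightarrow> 1" unfolding E3_def using B3(3) .
      have "(\<lambda>n. (1 - measure Q (E1 n)) + (1 - measure Q (E3 n))) \<longlonglongrightarrow> (1 - 1) + (1 - 1)"
        by (intro tendsto_intros l1 l3)
      then have "(\<lambda>n. (1 - measure Q (E1 n)) + (1 - measure Q (E3 n))) \<longlonglongrightarrow> 0" by simp
      then show ?thesis
      proof (rule tendsto_sandwich[rotated 2, OF tendsto_const])
        show "\<forall>\<^sub>F n in sequentially. measure Q (space Q - G n) \<le> (1 - measure Q (E1 n)) + (1 - measure Q (E3 n))"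
          using le by (intro always_eventually) blast
      qed auto
    qed
    have pw: "(\<lambda>n. indicator (G n) \<omega> * measure (Pb n (\<beta>0 n)) (Pair \<omega> -` Bad n)) \<longlonglongrightarrow> 0"
      if \<omega>: "\<omega> \<in> space Q" for \<omega>
    proof -
      define x where "x n = real n * (eps n)^2" for n
      define Hc where "Hc = enn2real (hyperC ac bc)"
      have hCfin: "hyperC ac bc < \<infinity>" using hyper_props(3)[of "{}" \<tau>0 ac bc] A6 by simp
      have hC: "hyperC ac bc = ennreal Hc" unfolding Hc_def using hCfin by simp
      have Hc0: "0 \<le> Hc" by (simp add: Hc_def)
      have xlim: "filterlim x at_top sequentially"
      proof -
        have e1: "\<forall>\<^sub>F n in sequentially. 0 \<le> s0 n * ln (m n)"
          using s0logm by (simp add: filterlim_at_top)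
        have e2: "\<forall>\<^sub>F n in sequentially. (0::nat) < n" by (rule eventually_gt_at_top)
        have ev: "\<forall>\<^sub>F n in sequentially. s0 n * ln (m n) = x n"
          using e1 e2
        proof eventually_elim
          case (elim n)
          have "x n = real n * (s0 n * ln (m n) / real n)"
            unfolding x_def eps_def s0_def m_def using elim(1) unfolding s0_def m_def
            by (simp add: real_sqrt_pow2)
          also have "\<dots> = s0 n * ln (m n)" using elim(2) by simp
          finally show ?case by simp
        qed
        show ?thesis using filterlim_cong[OF refl refl ev] s0logm by simp
      qed
      have explim: "(\<lambda>n. 2 * Hc / \<epsilon> * exp (- (\<delta> * x n))) \<longlonglongrightarrow> 0"
      proof -
        have "filterlim (\<lambda>n. \<delta> * x n) at_top sequentially"
          by (rule filterlim_tendsto_pos_mult_at_top[OF tendsto_const \<delta> xlim])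
        then have "filterlim (\<lambda>n. exp (\<delta> * x n)) at_top sequentially"
          by (rule filterlim_compose[OF exp_at_top])
        then have "(\<lambda>n. inverse (exp (\<delta> * x n))) \<longlonglongrightarrow> 0" by (rule tendsto_inverse_0_at_top)
        then have "(\<lambda>n. exp (- (\<delta> * x n))) \<longlonglongrightarrow> 0" by (simp add: exp_minus)
        then have "(\<lambda>n. 2 * Hc / \<epsilon> * exp (- (\<delta> * x n))) \<longlonglongrightarrow> 2 * Hc / \<epsilon> * 0"
          by (rule tendsto_mult[OF tendsto_const])
        then show ?thesis by simp
      qed
      have ident: "2 / (\<epsilon> * exp (- (CD + \<delta>) * real n * (eps n)^2)) * (exp (- cT M * real n * (eps n)^2) * Hc)
          = 2 * Hc / \<epsilon> * exp (- (\<delta> * x n))" for n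
      proof -
        have "exp (- cT M * real n * (eps n)^2) = exp (- (\<delta> * x n)) * exp (- (CD + \<delta>) * real n * (eps n)^2)"
          unfolding exp_add[symmetric] x_def \<delta>_def by (simp add: algebra_simps)
        then show ?thesis using \<epsilon> by simp
      qed
      show ?thesis
      proof (rule tendstoI)
        fix e' :: real assume e': "0 < e'"
        have ev1: "\<forall>\<^sub>F n in sequentially. \<forall>A \<in> active_sets (p n) (S0 n) (m n).
            measure (Pb n (\<beta>0 n)) (space (Pb n (\<beta>0 n)) - \<Omega> n \<omega> A) < e' / 3"
        proof -
          have "e' / 3 > 0" using e' by simp
          then show ?thesis using \<Omega>c \<omega> by blast
        qed
        have ev2: "\<forall>\<^sub>F n in sequentially. (\<integral>y. \<phi> n y \<partial>Pb n (\<beta>0 n)) < e' / 6"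
          using order_tendstoD(2)[OF \<phi>lim, of "e'/6"] e' by simp
        have ev3: "\<forall>\<^sub>F n in sequentially. 2 * Hc / \<epsilon> * exp (- (\<delta> * x n)) < e' / 3"
          using order_tendstoD(2)[OF explim, of "e'/3"] e' by simp
        show "\<forall>\<^sub>F n in sequentially. dist (indicator (G n) \<omega> * measure (Pb n (\<beta>0 n)) (Pair \<omega> -` Bad n)) 0 < e'"
          using ev1 ev2 ev3 \<phi>tail
        proof eventually_elim
          case (elim n)
          show ?case
          proof (cases "\<omega> \<in> G n")
            case False then show ?thesis using e' by simp
          next
            case True
            define A where "A = An n \<omega>"
            have A: "A \<in> active_sets (p n) (S0 n) (m n)" using True unfolding G_def A_def by simp
            have finA: "finite A" using A unfolding active_sets_def by (auto intro: finite_subset)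
            define S where "S = Pair \<omega> -` Bad n"
            have Ssets: "S \<in> sets (PN n)"
              using sets_Pair1[OF Bad_s[of n], of \<omega>] unfolding S_def Pb_def sets_data .
            have Spost: "active_posterior n (p n) (X n) \<sigma>0 (guided_prior (p n) A \<sigma>0 \<tau>0 ac bc \<sigma>\<eta> (z n \<omega>)) A y
                {\<beta>. M * eps n \<le> l2dist (p n) \<beta> (\<beta>0 n)} > \<epsilon>" if "y \<in> S" for y
              using that unfolding S_def Bad_def A_def Pr_def by auto
            have \<phi>m': "\<phi> n \<in> borel_measurable (PN n)"
              using \<phi>m[of n] unfolding Pb_def measurable_cong_sets[OF sets_data refl] .
            have tail: "(\<integral>y. 1 - \<phi> n y \<partial>data_measure n (p n) (X n) \<sigma>0 \<beta>) \<le> exp (- cT M * real n * (eps n)^2)"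
              if "\<beta> \<in> Theta (p n) A" "M * eps n \<le> l2dist (p n) \<beta> (\<beta>0 n)" for \<beta>
              using elim(4) A that unfolding Pb_def by auto
            have \<Omega>s': "\<Omega> n \<omega> A \<in> sets (PN n)" using \<Omega>s[of n \<omega> A] unfolding Pb_def sets_data .
            have evid: "exp (- (CD + \<delta>) * real n * (eps n)^2) \<le> (\<integral>\<beta>. indicator (Theta (p n) A) \<beta> *
                 (lik n (p n) (X n) \<sigma>0 \<beta> y / lik n (p n) (X n) \<sigma>0 (\<beta>0 n) y) \<partial>guided_prior (p n) A \<sigma>0 \<tau>0 ac bc \<sigma>\<eta> (z n \<omega>))"
              if "y \<in> \<Omega> n \<omega> A" for y
              using \<Omega>ev[OF \<omega> A that] unfolding Pr_def by simp
            have cb: "emeasure (data_measure n (p n) (X n) \<sigma>0 (\<beta>0 n)) S \<le> emeasure (data_measure n (p n) (X n) \<sigma>0 (\<beta>0 n)) (space (PN n) - \<Omega> n \<omega> A)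
              + ennreal (2 * (\<integral>y. \<phi> n y \<partial>data_measure n (p n) (X n) \<sigma>0 (\<beta>0 n)))
              + ennreal (2 / (\<epsilon> * exp (- (CD + \<delta>) * real n * (eps n)^2))) * (ennreal (exp (- cT M * real n * (eps n)^2)) * hyperC ac bc)"
              by (rule core[OF sigma0 finA A6(1-3) \<phi>m' \<phi>b tail _ \<Omega>s' evid _ \<epsilon> Ssets Spost]) auto
            let ?\<nu> = "data_measure n (p n) (X n) \<sigma>0 (\<beta>0 n)"
            interpret V: prob_space ?\<nu> by (rule prob_data[OF sigma0])
            have sp: "space (PN n) = space ?\<nu>" by (simp add: space_data)
            let ?ex = "exp (- (CD + \<delta>) * real n * (eps n)^2)"
            let ?tau = "exp (- cT M * real n * (eps n)^2)"
            let ?a = "measure ?\<nu> (space ?\<nu> - \<Omega> n \<omega> A)"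
            let ?b = "2 * (\<integral>y. \<phi> n y \<partial>?\<nu>)"
            let ?c = "2 / (\<epsilon> * ?ex) * (?tau * Hc)"
            have b0: "0 \<le> ?b" using \<phi>b by (simp add: integral_nonneg_AE)
            have c0: "0 \<le> ?c" using \<epsilon> Hc0 by simp
            have cc: "ennreal (2 / (\<epsilon> * ?ex)) * (ennreal ?tau * hyperC ac bc) = ennreal ?c"
              unfolding hC using \<epsilon> Hc0 by (simp add: ennreal_mult[symmetric])
            have "ennreal (measure ?\<nu> S) \<le> ennreal ?a + ennreal ?b + ennreal ?c"
              using cb unfolding sp cc by (simp add: V.emeasure_eq_measure)
            also have "\<dots> = ennreal (?a + ?b + ?c)" using b0 c0 by (simp add: ennreal_plus)
            finally have "ennreal (measure ?\<nu> S) \<le> ennreal (?a + ?b + ?c)" .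
            moreover have "0 \<le> ?a + ?b + ?c" using b0 c0 by simp
            ultimately have mle: "measure ?\<nu> S \<le> ?a + ?b + ?c"
              using ennreal_le_iff by blast
            have "?a < e' / 3" using elim(1) A unfolding Pb_def by auto
            moreover have "?b < e' / 3" using elim(2) unfolding Pb_def by simp
            moreover have "?c < e' / 3" using elim(3) ident[of n] by simp
            ultimately have "measure ?\<nu> S < e'" using mle by linarith
            then have "measure (Pb n (\<beta>0 n)) S < e'" unfolding Pb_def by simp
            then show ?thesis using True unfolding S_def by simp
          qed
        qed
      qed
    qed
    show ?thesis using final_limit[OF Q probPb Bad_s G_s Gc pw e] unfolding Bad_def by blast
  qed
  show ?thesis by (intro exI[of _ "max M1 M2"] allI impI main) auto
qed


end
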